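(* Let $n\ge1$, $\ell\ge0$, $k\ge0$ be integers. Let $A(n,\ell,k)$ be the number of rooted trees $T$ on $[n]$ such that the root of $T$ has exactly $\ell$ children smaller than the root and $\mathrm{MD}(T)$ has exactly $k+1$ vertices. Let $B(n,\ell,k)$ be the number of (unordered) forests on $[n]$ consisting of $\ell+1$ rooted trees such that $n$ is a leaf, and such that the sum of $|\mathrm{MD}(T)|$ over all trees $T$ of the forest other than the one containing $n$ equals $k$. Then $A(n,\ell,k)=B(n,\ell,k)$.
   Context: A rooted tree on a finite set is a tree on that set with a distinguished root; parent/child and leaves are taken with respect to the root (a leaf has no children). A rooted tree is decreasing if every nonleaf is greater than all of its children. For a rooted tree $T$, $\mathrm{MD}(T)$ denotes the maximal decreasing subtree of $T$: the maximal subtree of $T$ having the same root as $T$ that is decreasing; $|\mathrm{MD}(T)|$ is its number of vertices. A forest on $[n]$ is a set of rooted trees whose vertex sets partition $[n]$. *)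

theory Defs
  imports Main
begin

text \<open>A rooted forest on [n] = {1..n} is encoded by its parent map
  par :: nat \<Rightarrow> nat option: par v = Some u means u is the parent of v,
  par v = None means v is a root (or v is outside [n]).\<close>

definition par_edges :: "(nat \<Rightarrow> nat option) \<Rightarrow> (nat \<times> nat) set" where
  "par_edges par = {(v, u). par v = Some u}"

definition roots :: "nat \<Rightarrow> (nat \<Rightarrow> nat option) \<Rightarrow> nat set" where
  "roots n par = {r \<in> {1..n}. par r = None}"

definition forest_on :: "nat \<Rightarrow> (nat \<Rightarrow> nat option) \<Rightarrow> bool" where
  "forest_on n par \<longleftrightarrow>
     (\<forall>v. v \<notin> {1..n} \<longrightarrow> par v = None) \<and>
     (\<forall>v \<in> {1..n}. \<forall>u. par v = Some u \<longrightarrow> u \<in> {1..n}) \<and>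
     (\<forall>v \<in> {1..n}. \<exists>r \<in> roots n par. (v, r) \<in> (par_edges par)\<^sup>*)"

definition rooted_tree_on :: "nat \<Rightarrow> (nat \<Rightarrow> nat option) \<Rightarrow> bool" where
  "rooted_tree_on n par \<longleftrightarrow> forest_on n par \<and> card (roots n par) = 1"

definition children :: "(nat \<Rightarrow> nat option) \<Rightarrow> nat \<Rightarrow> nat set" where
  "children par v = {c. par c = Some v}"

definition root_of :: "nat \<Rightarrow> (nat \<Rightarrow> nat option) \<Rightarrow> nat \<Rightarrow> nat" where
  "root_of n par v = (THE r. r \<in> roots n par \<and> (v, r) \<in> (par_edges par)\<^sup>*)"

text \<open>S is the vertex set of a decreasing subtree, with root r, of the tree rooted
  at r: S lies in that tree, contains r, is closed under taking parents
  (so it induces a subtree with the same root), and every vertex of S other than r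
  is smaller than its parent (i.e. every nonleaf of the subtree is greater than
  all its children in the subtree).\<close>
definition decreasing_subtree :: "(nat \<Rightarrow> nat option) \<Rightarrow> nat \<Rightarrow> nat set \<Rightarrow> bool" where
  "decreasing_subtree par r S \<longleftrightarrow>
     r \<in> S \<and> (\<forall>v \<in> S. (v, r) \<in> (par_edges par)\<^sup>*) \<and>
     (\<forall>v \<in> S. \<forall>u. par v = Some u \<longrightarrow> u \<in> S \<and> v < u)"

text \<open>Vertex set of MD of the tree rooted at r: the maximal decreasing subtree
  (the union of all decreasing subtrees, which is itself the largest one).\<close>
definition MD :: "(nat \<Rightarrow> nat option) \<Rightarrow> nat \<Rightarrow> nat set" where
  "MD par r = \<Union> {S. decreasing_subtree par r S}"

definition A_count :: "nat \<Rightarrow> nat \<Rightarrow> nat \<Rightarrow> nat" where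
  "A_count n l k = card {par. rooted_tree_on n par \<and>
      (\<forall>r \<in> roots n par.
         card {c \<in> children par r. c < r} = l \<and> card (MD par r) = k + 1)}"

definition B_count :: "nat \<Rightarrow> nat \<Rightarrow> nat \<Rightarrow> nat" where
  "B_count n l k = card {par. forest_on n par \<and> card (roots n par) = l + 1 \<and>
      children par n = {} \<and>
      (\<Sum>r \<in> roots n par - {root_of n par n}. card (MD par r)) = k}"

end

theory Submission
  imports Defs
begin

lemma par_edges_iff[simp]: "(v,u) \<in> par_edges par \<longleftrightarrow> par v = Some u"
  by (simp add: par_edges_def)

definition rootsV :: "nat set \<Rightarrow> (nat \<Rightarrow> nat option) \<Rightarrow> nat set" where
  "rootsV V par = {r\<in>V. par r = None}"

definition forestV :: "nat set \<Rightarrow> (nat \<Rightarrow> nat option) \<Rightarrow> bool" where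
  "forestV V par \<longleftrightarrow> (\<forall>v. v \<notin> V \<longrightarrow> par v = None) \<and>
     (\<forall>v\<in>V. \<forall>u. par v = Some u \<longrightarrow> u \<in> V) \<and>
     (\<forall>v\<in>V. \<exists>r\<in>rootsV V par. (v,r) \<in> (par_edges par)\<^sup>*)"

definition root_ofV :: "nat set \<Rightarrow> (nat \<Rightarrow> nat option) \<Rightarrow> nat \<Rightarrow> nat" where
  "root_ofV V par v = (THE r. r \<in> rootsV V par \<and> (v,r) \<in> (par_edges par)\<^sup>*)"

lemma forest_on_eq: "forest_on n par = forestV {1..n} par"
  unfolding forest_on_def forestV_def roots_def rootsV_def by simp
lemma roots_eq: "roots n par = rootsV {1..n} par"
  unfolding roots_def rootsV_def by simp
lemma root_of_eq: "root_of n par v = root_ofV {1..n} par v"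
  unfolding root_of_def root_ofV_def roots_eq by simp

lemma step_from:
  assumes "(v,r) \<in> (par_edges par)\<^sup>*" "v \<noteq> r"
  shows "\<exists>u. par v = Some u \<and> (u,r) \<in> (par_edges par)\<^sup>*"
  using assms by (induction rule: converse_rtrancl_induct) auto

lemma root_reach:
  assumes "par r = None" "(r,w) \<in> (par_edges par)\<^sup>*" shows "w = r"
  using assms(2,1) by (induction rule: converse_rtrancl_induct) auto

lemma reach_linear:
  assumes "(v,a) \<in> (par_edges par)\<^sup>*" "(v,b) \<in> (par_edges par)\<^sup>*"
  shows "(a,b) \<in> (par_edges par)\<^sup>* \<or> (b,a) \<in> (par_edges par)\<^sup>*"
  using assms
proof (induction arbitrary: b rule: converse_rtrancl_induct)
  case base
  then show ?case by simp
next
  case (step v w)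
  show ?case
  proof (cases "b = v")
    case True
    then show ?thesis using step by (meson converse_rtrancl_into_rtrancl)
  next
    case False
    then obtain u where "par v = Some u" "(u,b) \<in> (par_edges par)\<^sup>*"
      using step_from[OF step.prems] by blast
    then show ?thesis using step by auto
  qed
qed

lemma cycle_back:
  assumes "(u,u) \<in> (par_edges par)\<^sup>+" "(u,w) \<in> (par_edges par)\<^sup>*"
  shows "(w,u) \<in> (par_edges par)\<^sup>*"
  using assms(2)
proof (induction rule: rtrancl_induct)
  case base then show ?case by simp
next
  case (step w w')
  show ?case
  proof (cases "w = u")
    case True
    from assms(1) obtain x where "(u,x) \<in> par_edges par" "(x,u) \<in> (par_edges par)\<^sup>*"
      using tranclD by metis
    then show ?thesis using step True by auto
  next
    case False
    then obtain y where "par w = Some y" "(y,u) \<in> (par_edges par)\<^sup>*"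
      using step_from[OF step.IH] by blast
    then show ?thesis using step by auto
  qed
qed

lemma forest_closed:
  assumes "forestV V par" "par v = Some u" shows "v \<in> V" "u \<in> V"
  using assms unfolding forestV_def by (metis option.distinct(1))+

lemma forest_outside: "forestV V par \<Longrightarrow> v \<notin> V \<Longrightarrow> par v = None"
  unfolding forestV_def by blast

lemma forest_reach_root: "forestV V par \<Longrightarrow> v \<in> V \<Longrightarrow> \<exists>r\<in>rootsV V par. (v,r) \<in> (par_edges par)\<^sup>*"
  unfolding forestV_def by blast

lemma forest_no_cycle:
  assumes "forestV V par" shows "(u,u) \<notin> (par_edges par)\<^sup>+"
proof
  assume c: "(u,u) \<in> (par_edges par)\<^sup>+"
  then obtain x where x: "par u = Some x" using tranclD by fastforce
  then have "u \<in> V" using forest_closed[OF assms] by blast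
  then obtain r where r: "r \<in> rootsV V par" "(u,r) \<in> (par_edges par)\<^sup>*"
    using forest_reach_root[OF assms] by blast
  have "(r,u) \<in> (par_edges par)\<^sup>*" using cycle_back[OF c r(2)] .
  then have "u = r" using root_reach r(1) unfolding rootsV_def by blast
  then show False using x r(1) unfolding rootsV_def by simp
qed

lemma forest_antisym:
  assumes "forestV V par" "(u,v) \<in> (par_edges par)\<^sup>*" "(v,u) \<in> (par_edges par)\<^sup>*"
  shows "u = v"
proof (rule ccontr)
  assume "u \<noteq> v"
  then have "(u,v) \<in> (par_edges par)\<^sup>+" using assms(2) by (meson rtranclD)
  then have "(u,u) \<in> (par_edges par)\<^sup>+" using assms(3) by simp
  then show False using forest_no_cycle[OF assms(1)] by blast
qed

lemma forest_reach_in: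
  assumes "forestV V par" "(v,w) \<in> (par_edges par)\<^sup>*" "v \<in> V" shows "w \<in> V"
  using assms(2,3) by (induction rule: rtrancl_induct) (auto dest: forest_closed[OF assms(1)])

lemma root_unique:
  assumes "forestV V par" "r1 \<in> rootsV V par" "r2 \<in> rootsV V par"
    "(v,r1) \<in> (par_edges par)\<^sup>*" "(v,r2) \<in> (par_edges par)\<^sup>*"
  shows "r1 = r2"
  using reach_linear[OF assms(4,5)] root_reach assms(2,3) unfolding rootsV_def by blast

lemma root_ofV_eq:
  assumes "forestV V par" "r \<in> rootsV V par" "(v,r) \<in> (par_edges par)\<^sup>*"
  shows "root_ofV V par v = r"
  unfolding root_ofV_def using assms root_unique by blast

lemma root_ofV:
  assumes "forestV V par" "v \<in> V"
  shows "root_ofV V par v \<in> rootsV V par" "(v, root_ofV V par v) \<in> (par_edges par)\<^sup>*"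
  using forest_reach_root[OF assms] root_ofV_eq[OF assms(1)] by metis+

lemma root_reach_eq:
  assumes "r \<in> rootsV V par" "(r,w) \<in> (par_edges par)\<^sup>*" shows "w = r"
  using assms root_reach unfolding rootsV_def by blast

definition dec :: "(nat \<Rightarrow> nat option) \<Rightarrow> (nat \<times> nat) set" where
  "dec par = {(v,u). par v = Some u \<and> v < u}"

lemma dec_iff[simp]: "(v,u) \<in> dec par \<longleftrightarrow> par v = Some u \<and> v < u"
  by (simp add: dec_def)

definition DD :: "(nat \<Rightarrow> nat option) \<Rightarrow> nat \<Rightarrow> nat set" where
  "DD par r = {v. (v,r) \<in> (dec par)\<^sup>*}"

lemma dec_sub: "(v,r) \<in> (dec par)\<^sup>* \<Longrightarrow> (v,r) \<in> (par_edges par)\<^sup>*"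
  by (induction rule: rtrancl_induct) (auto intro: rtrancl_into_rtrancl)

lemma MD_eq:
  assumes "par r = None" shows "MD par r = DD par r"
proof
  show "MD par r \<subseteq> DD par r"
  proof
    fix v assume "v \<in> MD par r"
    then obtain S where S: "decreasing_subtree par r S" "v \<in> S" unfolding MD_def by blast
    have "(v,r) \<in> (par_edges par)\<^sup>*" using S unfolding decreasing_subtree_def by blast
    then have "v \<in> S \<longrightarrow> (v,r) \<in> (dec par)\<^sup>*"
    proof (induction rule: converse_rtrancl_induct)
      case base then show ?case by simp
    next
      case (step v w)
      show ?case
      proof
        assume "v \<in> S"
        with S(1) step(1) have "w \<in> S" "v < w" unfolding decreasing_subtree_def by auto
        then have "(v,w) \<in> dec par" "(w,r) \<in> (dec par)\<^sup>*" using step by auto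
        then show "(v,r) \<in> (dec par)\<^sup>*" by (meson converse_rtrancl_into_rtrancl)
      qed
    qed
    then show "v \<in> DD par r" using S unfolding DD_def by blast
  qed
next
  have "decreasing_subtree par r (DD par r)"
    unfolding decreasing_subtree_def DD_def
  proof (intro conjI ballI allI impI)
    show "r \<in> {v. (v, r) \<in> (dec par)\<^sup>*}" by simp
    fix v assume v: "v \<in> {v. (v, r) \<in> (dec par)\<^sup>*}"
    then show "(v, r) \<in> (par_edges par)\<^sup>*" using dec_sub by blast
    fix u assume u: "par v = Some u"
    have "v \<noteq> r" using u assms by auto
    then obtain w where "(v,w) \<in> dec par" "(w,r) \<in> (dec par)\<^sup>*"
      using v by (metis converse_rtranclE mem_Collect_eq)
    then show "u \<in> {v. (v, r) \<in> (dec par)\<^sup>*}" "v < u" using u by auto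
  qed
  then show "DD par r \<subseteq> MD par r" unfolding MD_def by blast
qed

lemma dec_agree:
  assumes "r \<in> S" "\<forall>v\<in>S-{r}. par' v = par v"
    "\<forall>v u. par v = Some u \<longrightarrow> u \<in> S \<longrightarrow> v < u \<longrightarrow> v \<in> S"
    "(v,r) \<in> (dec par)\<^sup>*"
  shows "v \<in> S \<and> (v,r) \<in> (dec par')\<^sup>*"
  using assms(4)
proof (induction rule: converse_rtrancl_induct)
  case base then show ?case using assms(1) by simp
next
  case (step v w)
  then have vS: "v \<in> S" using assms(3) by auto
  show ?case
  proof (cases "v = r")
    case True then show ?thesis using vS by simp
  next
    case False
    then have "(v,w) \<in> dec par'" using step assms(2) vS by auto
    then show ?thesis using vS step by (meson converse_rtrancl_into_rtrancl)
  qed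
qed

lemma DD_agree:
  assumes "r \<in> S" "\<forall>v\<in>S-{r}. par' v = par v"
    "\<forall>v u. par v = Some u \<longrightarrow> u \<in> S \<longrightarrow> v < u \<longrightarrow> v \<in> S"
    "\<forall>v u. par' v = Some u \<longrightarrow> u \<in> S \<longrightarrow> v < u \<longrightarrow> v \<in> S"
  shows "DD par r = DD par' r" "DD par r \<subseteq> S"
proof -
  have a: "\<forall>v\<in>S-{r}. par v = par' v" using assms(2) by simp
  show "DD par r = DD par' r" unfolding DD_def
    using dec_agree[OF assms(1,2,3)] dec_agree[OF assms(1) a assms(4)] by blast
  show "DD par r \<subseteq> S" unfolding DD_def using dec_agree[OF assms(1,2,3)] by blast
qed


definition parmaps :: "nat set \<Rightarrow> (nat \<Rightarrow> nat option) set" where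
  "parmaps V = {f. \<forall>x. (x \<in> V \<longrightarrow> f x \<in> insert None (Some ` V)) \<and> (x \<notin> V \<longrightarrow> f x = None)}"

lemma finite_parmaps: "finite V \<Longrightarrow> finite (parmaps V)"
  unfolding parmaps_def by (rule finite_set_of_finite_funs) auto

lemma forest_parmaps:
  assumes F: "forestV V par" shows "par \<in> parmaps V"
  unfolding parmaps_def
proof (intro CollectI allI conjI impI)
  fix x assume "x \<in> V"
  show "par x \<in> insert None (Some ` V)"
  proof (cases "par x")
    case None then show ?thesis by simp
  next
    case (Some u) then have "u \<in> V" using forest_closed(2)[OF F] by blast
    then show ?thesis using Some by simp
  qed
next
  fix x assume "x \<notin> V" then show "par x = None" using forest_outside[OF F] by blast
qed

lemma finite_forests: "finite V \<Longrightarrow> finite {par. forestV V par \<and> P par}"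
  by (rule finite_subset[OF _ finite_parmaps]) (auto intro: forest_parmaps)

definition tr :: "(nat \<Rightarrow> nat) \<Rightarrow> nat set \<Rightarrow> (nat \<Rightarrow> nat option) \<Rightarrow> (nat \<Rightarrow> nat option)" where
  "tr h V par = (\<lambda>w. if w \<in> h ` V then map_option h (par (inv_into V h w)) else None)"

context
  fixes h :: "nat \<Rightarrow> nat" and V and par :: "nat \<Rightarrow> nat option"
  assumes inj: "inj_on h V" and F: "forestV V par"
begin

lemma tr_at: "v \<in> V \<Longrightarrow> tr h V par (h v) = map_option h (par v)"
  unfolding tr_def using inj by simp

lemma tr_edge: "v \<in> V \<Longrightarrow> par v = Some u \<Longrightarrow> tr h V par (h v) = Some (h u)"
  using tr_at by simp

lemma tr_edge_inv:
  assumes a: "tr h V par w = Some u'"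
  shows "\<exists>v u. v \<in> V \<and> u \<in> V \<and> w = h v \<and> u' = h u \<and> par v = Some u"
proof -
  have w: "w \<in> h ` V" using a unfolding tr_def by (auto split: if_splits)
  then obtain v where v: "v \<in> V" "w = h v" by blast
  then have "map_option h (par v) = Some u'" using a tr_at by simp
  then obtain u where "par v = Some u" "u' = h u" by auto
  then show ?thesis using v forest_closed(2)[OF F] by blast
qed

lemma tr_reach: "(v,r) \<in> (par_edges par)\<^sup>* \<Longrightarrow> v \<in> V \<Longrightarrow> (h v, h r) \<in> (par_edges (tr h V par))\<^sup>*"
proof (induction rule: converse_rtrancl_induct)
  case base then show ?case by simp
next
  case (step v w)
  then have "w \<in> V" using forest_closed[OF F] by auto
  then show ?case using step tr_edge[of v w]
    by (meson converse_rtrancl_into_rtrancl par_edges_iff)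
qed

lemma tr_roots: "rootsV (h ` V) (tr h V par) = h ` rootsV V par"
  unfolding rootsV_def using tr_at by force

lemma tr_forest: "forestV (h ` V) (tr h V par)"
  unfolding forestV_def
proof (intro conjI ballI allI impI)
  fix v assume "v \<notin> h ` V" then show "tr h V par v = None" unfolding tr_def by simp
next
  fix v u assume "v \<in> h ` V" "tr h V par v = Some u"
  then show "u \<in> h ` V" using tr_edge_inv by blast
next
  fix v assume "v \<in> h ` V"
  then obtain x where x: "x \<in> V" "v = h x" by blast
  then obtain r where "r \<in> rootsV V par" "(x,r) \<in> (par_edges par)\<^sup>*" using forest_reach_root[OF F] by blast
  then show "\<exists>r\<in>rootsV (h ` V) (tr h V par). (v, r) \<in> (par_edges (tr h V par))\<^sup>*"
    using tr_roots tr_reach x by blast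
qed

lemma tr_children: "x \<in> V \<Longrightarrow> children (tr h V par) (h x) = h ` children par x"
  unfolding children_def
proof safe
  fix c assume "x \<in> V" "tr h V par c = Some (h x)"
  then obtain v u where "v \<in> V" "u \<in> V" "c = h v" "h x = h u" "par v = Some u" using tr_edge_inv by blast
  then show "c \<in> h ` {c. par c = Some x}" using inj \<open>x \<in> V\<close> by (auto dest: inj_onD)
next
  fix c assume "x \<in> V" "par c = Some x"
  then show "tr h V par (h c) = Some (h x)" using tr_edge forest_closed[OF F] by blast
qed

lemma tr_inv: "tr (inv_into V h) (h ` V) (tr h V par) = par"
proof
  fix w
  show "tr (inv_into V h) (h ` V) (tr h V par) w = par w"
  proof (cases "w \<in> V")
    case True
    have i: "inv_into V h ` h ` V = V" using inj by simp
    have e1: "inv_into (h ` V) (inv_into V h) w = h w"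
      by (rule inv_into_f_eq) (use inj True in \<open>auto simp: inj_on_inv_into\<close>)
    have "tr (inv_into V h) (h ` V) (tr h V par) w = map_option (inv_into V h) (tr h V par (h w))"
      unfolding tr_def using True i e1 by simp
    also have "\<dots> = par w" using tr_at[OF True] True inj F
      by (cases "par w") (auto dest: forest_closed)
    finally show ?thesis .
  next
    case False
    then show ?thesis unfolding tr_def using inj forest_outside[OF F False] by auto
  qed
qed

lemma tr_root_of: "v \<in> V \<Longrightarrow> root_ofV (h ` V) (tr h V par) (h v) = h (root_ofV V par v)"
  using root_ofV_eq[OF tr_forest] tr_roots root_ofV[OF F] tr_reach by blast

end

lemma tr_dec:
  assumes inj: "inj_on h V" and F: "forestV V par" and mono: "strict_mono_on V h"
  shows "(v,r) \<in> (dec par)\<^sup>* \<Longrightarrow> v \<in> V \<Longrightarrow> (h v, h r) \<in> (dec (tr h V par))\<^sup>*"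
proof (induction rule: converse_rtrancl_induct)
  case base then show ?case by simp
next
  case (step v w)
  then have "w \<in> V" using forest_closed[OF F] by auto
  then have "(h v, h w) \<in> dec (tr h V par)" using step tr_edge[OF inj F, of v w] mono
    by (simp add: strict_mono_on_def)
  then show ?case using step \<open>w \<in> V\<close> by (meson converse_rtrancl_into_rtrancl)
qed

lemma DD_in: "forestV V par \<Longrightarrow> r \<in> V \<Longrightarrow> v \<in> DD par r \<Longrightarrow> v \<in> V"
  unfolding DD_def
  by (metis converse_rtranclE dec_iff forest_closed(1) mem_Collect_eq)

lemma strict_mono_inv:
  fixes h :: "nat \<Rightarrow> nat"
  assumes "strict_mono_on V h"
  shows "strict_mono_on (h ` V) (inv_into V h)"
proof (rule strict_mono_onI)
  fix x y assume xy: "x \<in> h ` V" "y \<in> h ` V" "x < y"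
  then obtain a b where ab: "a \<in> V" "b \<in> V" "x = h a" "y = h b" by blast
  have inj: "inj_on h V" using strict_mono_on_imp_inj_on[OF assms] .
  have "inv_into V h x = a" "inv_into V h y = b" using ab inj by auto
  moreover have "a < b"
  proof (rule ccontr)
    assume "\<not> a < b"
    then have "b < a \<or> b = a" by auto
    then show False using xy ab strict_mono_onD[OF assms, of b a] by auto
  qed
  ultimately show "inv_into V h x < inv_into V h y" by simp
qed

lemma tr_DD:
  assumes inj: "inj_on h V" and F: "forestV V par" and mono: "strict_mono_on V h" and r: "r \<in> V"
  shows "DD (tr h V par) (h r) = h ` DD par r"
proof
  show "h ` DD par r \<subseteq> DD (tr h V par) (h r)"
    using tr_dec[OF assms(1-3)] DD_in[OF F r] unfolding DD_def by auto
next
  let ?g = "inv_into V h" and ?q = "tr h V par"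
  have F2: "forestV (h ` V) ?q" by (rule tr_forest[OF inj F])
  have inj2: "inj_on ?g (h ` V)" using inj by (simp add: inj_on_inv_into)
  have m2: "strict_mono_on (h ` V) ?g" using strict_mono_inv[OF mono] .
  show "DD ?q (h r) \<subseteq> h ` DD par r"
  proof
    fix w assume w: "w \<in> DD ?q (h r)"
    then have wV: "w \<in> h ` V" using DD_in[OF F2] r by blast
    have "(?g w, ?g (h r)) \<in> (dec (tr ?g (h ` V) ?q))\<^sup>*"
      using tr_dec[OF inj2 F2 m2] w wV unfolding DD_def by blast
    then have "?g w \<in> DD par r" using tr_inv[OF inj F] inj r unfolding DD_def by simp
    then show "w \<in> h ` DD par r" using wV by (metis f_inv_into_f imageI)
  qed
qed

lemma tr_MD:
  assumes inj: "inj_on h V" and F: "forestV V par" and mono: "strict_mono_on V h"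
    and r: "r \<in> rootsV V par"
  shows "MD (tr h V par) (h r) = h ` MD par r"
proof -
  have rV: "r \<in> V" and n: "par r = None" using r unfolding rootsV_def by auto
  have "h r \<in> rootsV (h ` V) (tr h V par)" using tr_roots[OF inj F] r by blast
  then have n2: "tr h V par (h r) = None" unfolding rootsV_def by simp
  show ?thesis using MD_eq[of par r, OF n] MD_eq[of "tr h V par" "h r", OF n2] tr_DD[OF assms(1-3) rV] by simp
qed


definition aset :: "nat \<Rightarrow> nat \<Rightarrow> nat set \<Rightarrow> (nat \<Rightarrow> nat option) set" where
  "aset l k V = {par. forestV V par \<and> card (rootsV V par) = 1 \<and>
      (\<forall>r \<in> rootsV V par. card {c \<in> children par r. c < r} = l \<and> card (MD par r) = k + 1)}"

definition bset :: "nat \<Rightarrow> nat \<Rightarrow> nat set \<Rightarrow> nat \<Rightarrow> (nat \<Rightarrow> nat option) set" where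
  "bset l k V x = {par. forestV V par \<and> card (rootsV V par) = l + 1 \<and> children par x = {} \<and>
      (\<Sum>r \<in> rootsV V par - {root_ofV V par x}. card (MD par r)) = k}"

definition fset :: "nat \<Rightarrow> nat \<Rightarrow> nat set \<Rightarrow> (nat \<Rightarrow> nat option) set" where
  "fset l k W = {par. forestV W par \<and> card (rootsV W par) = l \<and>
      (\<Sum>r \<in> rootsV W par. card (MD par r)) = k}"

definition rtreeAt :: "nat set \<Rightarrow> nat \<Rightarrow> (nat \<Rightarrow> nat option) set" where
  "rtreeAt J x = {t. forestV J t \<and> rootsV J t = {x}}"

definition rtrees :: "nat set \<Rightarrow> (nat \<Rightarrow> nat option) set" where
  "rtrees I = {t. forestV I t \<and> card (rootsV I t) = 1}"

lemma A_count_eq: "A_count n l k = card (aset l k {1..n})"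
  unfolding A_count_def aset_def rooted_tree_on_def forest_on_eq roots_eq by (simp add: conj_assoc)

lemma B_count_eq: "B_count n l k = card (bset l k {1..n} n)"
  unfolding B_count_def bset_def forest_on_eq roots_eq root_of_eq ..

lemma tr_cong:
  assumes "\<forall>x\<in>V. h x = h' x" "forestV V p"
  shows "tr h V p = tr h' V p"
proof
  fix w
  have im: "h ` V = h' ` V" using assms(1) by force
  have "(\<lambda>x. x \<in> V \<and> h x = w) = (\<lambda>x. x \<in> V \<and> h' x = w)" using assms(1) by auto
  then have iv: "inv_into V h w = inv_into V h' w" by (simp add: inv_into_def)
  show "tr h V p w = tr h' V p w"
  proof (cases "w \<in> h ` V")
    case True
    then have "inv_into V h w \<in> V" by (simp add: inv_into_into)
    then have "\<forall>u. p (inv_into V h w) = Some u \<longrightarrow> u \<in> V" using forest_closed(2)[OF assms(2)] by blast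
    then show ?thesis unfolding tr_def using True im iv assms(1)
      by (cases "p (inv_into V h w)") auto
  next
    case False then show ?thesis unfolding tr_def using im by simp
  qed
qed

lemma card_transport:
  fixes h :: "nat \<Rightarrow> nat"
  assumes inj: "inj_on h V"
    and S1: "\<And>par. par \<in> S \<Longrightarrow> forestV V par \<and> tr h V par \<in> S'"
    and S2: "\<And>q. q \<in> S' \<Longrightarrow> forestV (h ` V) q \<and> tr (inv_into V h) (h ` V) q \<in> S"
  shows "card S = card S'"
proof -
  let ?g = "inv_into V h"
  have inj2: "inj_on ?g (h ` V)" by (simp add: inj_on_inv_into)
  have gi: "?g ` h ` V = V" using inj by simp
  have "bij_betw (tr h V) S S'"
  proof (rule bij_betw_byWitness[where f' = "tr ?g (h ` V)"])
    show "\<forall>a\<in>S. tr ?g (h ` V) (tr h V a) = a" using tr_inv[OF inj] S1 by blast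
    show "\<forall>a'\<in>S'. tr h V (tr ?g (h ` V) a') = a'"
    proof
      fix q assume q: "q \<in> S'"
      then have Fq: "forestV (h ` V) q" using S2 by blast
      have Fg: "forestV V (tr ?g (h ` V) q)" using tr_forest[OF inj2 Fq] gi by simp
      have "\<forall>x\<in>V. h x = inv_into (h ` V) ?g x" using inj
        by (metis imageI inv_into_f_f inv_into_into inj2 inv_into_f_eq)
      then have "tr h V (tr ?g (h ` V) q) = tr (inv_into (h ` V) ?g) V (tr ?g (h ` V) q)"
        using tr_cong Fg by blast
      also have "\<dots> = q" using tr_inv[OF inj2 Fq] gi by simp
      finally show "tr h V (tr ?g (h ` V) q) = q" .
    qed
    show "tr h V ` S \<subseteq> S'" using S1 by blast
    show "tr ?g (h ` V) ` S' \<subseteq> S" using S2 by blast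
  qed
  then show ?thesis by (rule bij_betw_same_card)
qed

lemma aset_tr:
  fixes h :: "nat \<Rightarrow> nat"
  assumes mono: "strict_mono_on V h" and p: "par \<in> aset l k V"
  shows "tr h V par \<in> aset l k (h ` V)"
proof -
  have inj: "inj_on h V" using strict_mono_on_imp_inj_on[OF mono] .
  have F: "forestV V par" using p unfolding aset_def by blast
  have R: "rootsV (h ` V) (tr h V par) = h ` rootsV V par" by (rule tr_roots[OF inj F])
  have RV: "rootsV V par \<subseteq> V" unfolding rootsV_def by blast
  have c1: "card (rootsV (h ` V) (tr h V par)) = 1" using R p inj RV
    unfolding aset_def by (simp add: card_image inj_on_subset)
  have "\<forall>r'\<in>rootsV (h ` V) (tr h V par). card {c \<in> children (tr h V par) r'. c < r'} = l \<and>
       card (MD (tr h V par) r') = k + 1"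
  proof
    fix r' assume "r' \<in> rootsV (h ` V) (tr h V par)"
    then obtain r where r: "r \<in> rootsV V par" "r' = h r" using R by blast
    then have rV: "r \<in> V" using RV by blast
    have chV: "children par r \<subseteq> V" unfolding children_def using forest_closed(1)[OF F] by blast
    have "{c \<in> children (tr h V par) r'. c < r'} = h ` {c \<in> children par r. c < r}"
    proof -
      have "{c \<in> children (tr h V par) r'. c < r'} = {c \<in> h ` children par r. c < h r}"
        using tr_children[OF inj F rV] r by simp
      also have "\<dots> = h ` {c \<in> children par r. c < r}"
      proof safe
        fix c assume "c \<in> children par r" "h c < h r"
        then show "h c \<in> h ` {c \<in> children par r. c < r}"
          using chV rV mono by (metis (mono_tags, lifting) image_eqI mem_Collect_eq strict_mono_on_leD
              linorder_not_le subsetD)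
      next
        fix c assume "c \<in> children par r" "c < r"
        then show "h c < h r" using chV rV mono by (meson strict_mono_onD subsetD)
      qed auto
      finally show ?thesis .
    qed
    then have "card {c \<in> children (tr h V par) r'. c < r'} = card {c \<in> children par r. c < r}"
      using inj chV by (simp add: card_image inj_on_subset subset_iff)
    moreover have "card (MD (tr h V par) r') = card (MD par r)"
    proof -
      have "MD par r \<subseteq> V" using MD_eq[of par r] r DD_in[OF F rV] unfolding rootsV_def by auto
      then show ?thesis using tr_MD[OF inj F mono r(1)] r inj by (simp add: card_image inj_on_subset)
    qed
    ultimately show "card {c \<in> children (tr h V par) r'. c < r'} = l \<and> card (MD (tr h V par) r') = k + 1"
      using p r unfolding aset_def by auto
  qed
  then show ?thesis unfolding aset_def using tr_forest[OF inj F] c1 by blast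
qed

lemma bset_tr:
  fixes h :: "nat \<Rightarrow> nat"
  assumes mono: "strict_mono_on V h" and p: "par \<in> bset l k V x" and xV: "x \<in> V"
  shows "tr h V par \<in> bset l k (h ` V) (h x)"
proof -
  have inj: "inj_on h V" using strict_mono_on_imp_inj_on[OF mono] .
  have F: "forestV V par" using p unfolding bset_def by blast
  have R: "rootsV (h ` V) (tr h V par) = h ` rootsV V par" by (rule tr_roots[OF inj F])
  have RV: "rootsV V par \<subseteq> V" unfolding rootsV_def by blast
  have c1: "card (rootsV (h ` V) (tr h V par)) = l + 1" using R p inj RV
    unfolding bset_def by (simp add: card_image inj_on_subset)
  have ch: "children (tr h V par) (h x) = {}" using tr_children[OF inj F xV] p unfolding bset_def by simp
  have ro: "root_ofV (h ` V) (tr h V par) (h x) = h (root_ofV V par x)" by (rule tr_root_of[OF inj F xV])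
  have rx: "root_ofV V par x \<in> V" using root_ofV(1)[OF F xV] RV by blast
  have RR: "rootsV (h ` V) (tr h V par) - {root_ofV (h ` V) (tr h V par) (h x)}
        = h ` (rootsV V par - {root_ofV V par x})"
  proof -
    have "h ` (rootsV V par - {root_ofV V par x}) = h ` rootsV V par - h ` {root_ofV V par x}"
      by (rule inj_on_image_set_diff[OF inj]) (use RV rx in auto)
    then show ?thesis using R ro by simp
  qed
  then have "(\<Sum>r\<in>rootsV (h ` V) (tr h V par) - {root_ofV (h ` V) (tr h V par) (h x)}. card (MD (tr h V par) r))
     = (\<Sum>r\<in>rootsV V par - {root_ofV V par x}. card (MD (tr h V par) (h r)))"
  proof -
    have "inj_on h (rootsV V par - {root_ofV V par x})" using inj RV by (meson Diff_subset inj_on_subset subset_trans)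
    then show ?thesis using RR by (simp add: sum.reindex)
  qed
  also have "\<dots> = (\<Sum>r\<in>rootsV V par - {root_ofV V par x}. card (MD par r))"
  proof (rule sum.cong[OF refl])
    fix r assume r: "r \<in> rootsV V par - {root_ofV V par x}"
    then have rV: "r \<in> V" using RV by blast
    have "MD par r \<subseteq> V" using MD_eq[of par r] r DD_in[OF F rV] unfolding rootsV_def by auto
    then show "card (MD (tr h V par) (h r)) = card (MD par r)"
      using tr_MD[OF inj F mono, of r] r inj by (simp add: card_image inj_on_subset)
  qed
  finally show ?thesis using p c1 ch tr_forest[OF inj F] unfolding bset_def by simp
qed

lemma rtreeAt_tr:
  fixes h :: "nat \<Rightarrow> nat"
  assumes inj: "inj_on h J" and p: "t \<in> rtreeAt J x"
  shows "tr h J t \<in> rtreeAt (h ` J) (h x)"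
  using p tr_roots[OF inj] tr_forest[OF inj] unfolding rtreeAt_def by auto

definition cnt :: "nat set \<Rightarrow> nat \<Rightarrow> nat" where
  "cnt Z v = card {u \<in> Z. u \<le> v}"

lemma cnt_mono: assumes "finite Z" shows "strict_mono_on Z (cnt Z)"
proof (rule strict_mono_onI)
  fix r s assume "r \<in> Z" "s \<in> Z" "r < s"
  then have "{u \<in> Z. u \<le> r} \<subseteq> {u \<in> Z. u \<le> s}" "s \<in> {u \<in> Z. u \<le> s}" "s \<notin> {u \<in> Z. u \<le> r}" by auto
  then have "{u \<in> Z. u \<le> r} \<subset> {u \<in> Z. u \<le> s}" by blast
  then show "cnt Z r < cnt Z s" unfolding cnt_def using assms by (simp add: psubset_card_mono)
qed

lemma cnt_image: assumes "finite Z" shows "cnt Z ` Z = {1..card Z}"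
proof -
  have sub: "cnt Z ` Z \<subseteq> {1..card Z}"
  proof
    fix y assume "y \<in> cnt Z ` Z"
    then obtain v where v: "v \<in> Z" "y = cnt Z v" by blast
    have "{u \<in> Z. u \<le> v} \<noteq> {}" using v by auto
    then have "1 \<le> y" unfolding v cnt_def using assms by (simp add: Suc_leI card_gt_0_iff)
    moreover have "y \<le> card Z" unfolding v cnt_def using assms by (simp add: card_mono)
    ultimately show "y \<in> {1..card Z}" by simp
  qed
  have "card (cnt Z ` Z) = card Z"
    using strict_mono_on_imp_inj_on[OF cnt_mono[OF assms]] by (simp add: card_image)
  then show ?thesis using sub by (simp add: card_subset_eq)
qed

lemma cnt_Max: assumes "finite Z" "Z \<noteq> {}" shows "cnt Z (Max Z) = card Z"
proof -
  have "{u \<in> Z. u \<le> Max Z} = Z" using assms by auto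
  then show ?thesis unfolding cnt_def by simp
qed

lemma aset_inv:
  assumes "finite Z" shows "card (aset l k Z) = card (aset l k {1..card Z})"
proof -
  let ?h = "cnt Z"
  have m: "strict_mono_on Z ?h" by (rule cnt_mono[OF assms])
  have inj: "inj_on ?h Z" using strict_mono_on_imp_inj_on[OF m] .
  have im: "?h ` Z = {1..card Z}" by (rule cnt_image[OF assms])
  have m2: "strict_mono_on (?h ` Z) (inv_into Z ?h)" by (rule strict_mono_inv[OF m])
  have gi: "inv_into Z ?h ` ?h ` Z = Z" using inj by simp
  show ?thesis
  proof (rule card_transport[OF inj, unfolded im])
    fix par assume p: "par \<in> aset l k Z"
    have "forestV Z par" using p unfolding aset_def by blast
    moreover have "tr ?h Z par \<in> aset l k (?h ` Z)" by (rule aset_tr[OF m p])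
    ultimately show "forestV Z par \<and> tr ?h Z par \<in> aset l k {1..card Z}" using im by simp
  next
    fix q assume q: "q \<in> aset l k {1..card Z}"
    have "forestV {1..card Z} q" using q unfolding aset_def by blast
    moreover have q': "q \<in> aset l k (?h ` Z)" using q im by simp
    have "tr (inv_into Z ?h) (?h ` Z) q \<in> aset l k (inv_into Z ?h ` ?h ` Z)" by (rule aset_tr[OF m2 q'])
    ultimately show "forestV {1..card Z} q \<and> tr (inv_into Z ?h) {1..card Z} q \<in> aset l k Z"
      using gi im by simp
  qed
qed

lemma bset_inv:
  assumes "finite Z" "Z \<noteq> {}"
  shows "card (bset l k Z (Max Z)) = card (bset l k {1..card Z} (card Z))"
proof -
  let ?h = "cnt Z"
  have m: "strict_mono_on Z ?h" by (rule cnt_mono[OF assms(1)])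
  have inj: "inj_on ?h Z" using strict_mono_on_imp_inj_on[OF m] .
  have im: "?h ` Z = {1..card Z}" by (rule cnt_image[OF assms(1)])
  have m2: "strict_mono_on (?h ` Z) (inv_into Z ?h)" by (rule strict_mono_inv[OF m])
  have gi: "inv_into Z ?h ` ?h ` Z = Z" using inj by simp
  have mx: "Max Z \<in> Z" using assms by simp
  have hm: "?h (Max Z) = card Z" by (rule cnt_Max[OF assms])
  have gm: "inv_into Z ?h (card Z) = Max Z" using hm inj mx by (metis inv_into_f_f)
  have cZ: "card Z \<in> ?h ` Z" using hm mx by (metis imageI)
  show ?thesis
  proof (rule card_transport[OF inj, unfolded im])
    fix par assume p: "par \<in> bset l k Z (Max Z)"
    have "forestV Z par" using p unfolding bset_def by blast
    moreover have "tr ?h Z par \<in> bset l k (?h ` Z) (?h (Max Z))" by (rule bset_tr[OF m p mx])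
    ultimately show "forestV Z par \<and> tr ?h Z par \<in> bset l k {1..card Z} (card Z)" using im hm by simp
  next
    fix q assume q: "q \<in> bset l k {1..card Z} (card Z)"
    have "forestV {1..card Z} q" using q unfolding bset_def by blast
    moreover have q': "q \<in> bset l k (?h ` Z) (card Z)" using q im by simp
    have "tr (inv_into Z ?h) (?h ` Z) q \<in> bset l k (inv_into Z ?h ` ?h ` Z) (inv_into Z ?h (card Z))"
      by (rule bset_tr[OF m2 q' cZ])
    ultimately show "forestV {1..card Z} q \<and> tr (inv_into Z ?h) {1..card Z} q \<in> bset l k Z (Max Z)"
      using gi im gm by simp
  qed
qed

definition sw :: "nat \<Rightarrow> nat \<Rightarrow> nat \<Rightarrow> nat" where
  "sw a b y = (if y = a then b else if y = b then a else y)"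

lemma sw_inj: "inj (sw a b)" unfolding sw_def inj_def by auto
lemma sw_invol: "sw a b (sw a b y) = y" by (simp add: sw_def)
lemma sw_image: assumes "a \<in> A" "b \<in> A" shows "sw a b ` A = A"
proof
  show "sw a b ` A \<subseteq> A" using assms by (auto simp: sw_def)
  show "A \<subseteq> sw a b ` A"
  proof
    fix y assume "y \<in> A"
    then have "sw a b y \<in> A" using assms by (simp add: sw_def)
    then show "y \<in> sw a b ` A" by (metis sw_invol imageI)
  qed
qed

lemma rtreeAt_inv:
  assumes "finite J" "x \<in> J"
  shows "card (rtreeAt J x) = card (rtreeAt {1..card J} (card J))"
proof -
  let ?h = "sw (cnt J x) (card J) \<circ> cnt J"
  have inj0: "inj_on (cnt J) J" using strict_mono_on_imp_inj_on[OF cnt_mono[OF assms(1)]] .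
  have inj: "inj_on ?h J" by (rule comp_inj_on[OF inj0], rule inj_on_subset[OF sw_inj], simp)
  have cx: "cnt J x \<in> {1..card J}" using cnt_image[OF assms(1)] assms(2) by blast
  have cm: "card J \<in> {1..card J}" using cx by auto
  have "?h ` J = sw (cnt J x) (card J) ` (cnt J ` J)" by (rule image_comp[symmetric])
  then have im: "?h ` J = {1..card J}"
    using cnt_image[OF assms(1)] sw_image[OF cx cm] by simp
  have hx: "?h x = card J" by (simp add: sw_def)
  have gi: "inv_into J ?h ` ?h ` J = J" by (rule inv_into_image_cancel[OF inj subset_refl])
  have gx: "inv_into J ?h (card J) = x" using hx inj assms(2) by (metis inv_into_f_f)
  have inj2: "inj_on (inv_into J ?h) (?h ` J)" by (simp add: inj_on_inv_into)
  show ?thesis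
  proof (rule card_transport[OF inj, unfolded im])
    fix par assume p: "par \<in> rtreeAt J x"
    have "forestV J par" using p unfolding rtreeAt_def by blast
    moreover have "tr ?h J par \<in> rtreeAt (?h ` J) (?h x)" by (rule rtreeAt_tr[OF inj p])
    ultimately show "forestV J par \<and> tr ?h J par \<in> rtreeAt {1..card J} (card J)" using im hx by simp
  next
    fix q assume q: "q \<in> rtreeAt {1..card J} (card J)"
    have "forestV {1..card J} q" using q unfolding rtreeAt_def by blast
    moreover have q': "q \<in> rtreeAt (?h ` J) (card J)" using q im by simp
    have "tr (inv_into J ?h) (?h ` J) q \<in> rtreeAt (inv_into J ?h ` ?h ` J) (inv_into J ?h (card J))"
      by (rule rtreeAt_tr[OF inj2 q'])
    ultimately show "forestV {1..card J} q \<and> tr (inv_into J ?h) {1..card J} q \<in> rtreeAt J x"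
      using gi im gx by simp
  qed
qed


lemma reach_into: "(v,n) \<in> (par_edges par)\<^sup>* \<Longrightarrow> v \<noteq> n \<Longrightarrow> \<exists>w. par w = Some n"
  by (erule rtranclE) auto

lemma MD_sub_V:
  assumes "forestV V par" "r \<in> rootsV V par" shows "MD par r \<subseteq> V"
proof -
  have "r \<in> V" "par r = None" using assms(2) unfolding rootsV_def by auto
  then show ?thesis using MD_eq[of par r] DD_in[OF assms(1)] by blast
qed

lemma finite_MD: "finite V \<Longrightarrow> forestV V par \<Longrightarrow> r \<in> rootsV V par \<Longrightarrow> finite (MD par r)"
  by (rule finite_subset[OF MD_sub_V]) auto

lemma bset_isolated:
  assumes finV: "finite V" and nV: "n \<in> V"
  shows "{par \<in> bset l k V n. par n = None} = fset l k (V - {n})"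
proof (intro equalityI subsetI)
  fix par assume "par \<in> {par \<in> bset l k V n. par n = None}"
  then have F: "forestV V par" and c: "card (rootsV V par) = l + 1" and ch: "children par n = {}"
    and s: "(\<Sum>r \<in> rootsV V par - {root_ofV V par n}. card (MD par r)) = k" and pn: "par n = None"
    unfolding bset_def by auto
  have nR: "n \<in> rootsV V par" using nV pn unfolding rootsV_def by simp
  have ro: "root_ofV V par n = n" using root_ofV_eq[OF F nR] by simp
  have R: "rootsV (V - {n}) par = rootsV V par - {n}" unfolding rootsV_def by auto
  have F2: "forestV (V - {n}) par"
    unfolding forestV_def
  proof (intro conjI ballI allI impI)
    fix v assume "v \<notin> V - {n}" then show "par v = None" using pn forest_outside[OF F] by auto
  next
    fix v u assume "v \<in> V - {n}" "par v = Some u"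
    then show "u \<in> V - {n}" using forest_closed[OF F] ch unfolding children_def by auto
  next
    fix v assume v: "v \<in> V - {n}"
    then obtain r where r: "r \<in> rootsV V par" "(v,r) \<in> (par_edges par)\<^sup>*"
      using forest_reach_root[OF F] by blast
    have "r \<noteq> n" using reach_into[of v n par] r v ch unfolding children_def by auto
    then show "\<exists>r\<in>rootsV (V - {n}) par. (v, r) \<in> (par_edges par)\<^sup>*" using r R by blast
  qed
  have "card (rootsV (V - {n}) par) = l" using R c nR by (simp add: card_Diff_singleton)
  then show "par \<in> fset l k (V - {n})" unfolding fset_def using F2 s ro R by simp
next
  fix G assume G: "G \<in> fset l k (V - {n})"
  then have F: "forestV (V - {n}) G" and c: "card (rootsV (V - {n}) G) = l"
    and s: "(\<Sum>r \<in> rootsV (V - {n}) G. card (MD G r)) = k"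
    unfolding fset_def by auto
  have pn: "G n = None" using forest_outside[OF F] by simp
  have R: "rootsV V G = insert n (rootsV (V - {n}) G)" unfolding rootsV_def using nV pn by auto
  have FV: "forestV V G"
    unfolding forestV_def
  proof (intro conjI ballI allI impI)
    fix v assume "v \<notin> V" then show "G v = None" using forest_outside[OF F] by auto
  next
    fix v u assume "v \<in> V" "G v = Some u"
    then show "u \<in> V" using forest_closed[OF F] by auto
  next
    fix v assume v: "v \<in> V"
    show "\<exists>r\<in>rootsV V G. (v, r) \<in> (par_edges G)\<^sup>*"
    proof (cases "v = n")
      case True then show ?thesis using R by auto
    next
      case False then show ?thesis using forest_reach_root[OF F, of v] v R by auto
    qed
  qed
  have nR: "n \<in> rootsV V G" using R by simp
  have ro: "root_ofV V G n = n" using root_ofV_eq[OF FV nR] by simp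
  have ch: "children G n = {}" unfolding children_def using forest_closed[OF F] by auto
  have nn: "n \<notin> rootsV (V - {n}) G" unfolding rootsV_def by simp
  show "G \<in> {par \<in> bset l k V n. par n = None}"
  proof -
    have "finite (rootsV (V - {n}) G)" using finV by (rule finite_subset[rotated]) (auto simp: rootsV_def)
    then have "card (rootsV V G) = l + 1" using R nn c by simp
    then show ?thesis unfolding bset_def using FV s pn ch ro R nn by simp
  qed
qed


definition Dset :: "(nat \<Rightarrow> nat option) \<Rightarrow> nat \<Rightarrow> nat set" where
  "Dset par x = {v. (v,x) \<in> (par_edges par)\<^sup>*}"

definition tI :: "nat set \<Rightarrow> (nat \<Rightarrow> nat option) \<Rightarrow> nat \<Rightarrow> (nat \<Rightarrow> nat option)" where
  "tI I par n = (\<lambda>v. if v \<in> I \<and> par n \<noteq> Some v then par v else None)"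

definition fI :: "nat set \<Rightarrow> nat set \<Rightarrow> nat \<Rightarrow> (nat \<Rightarrow> nat option) \<Rightarrow> (nat \<Rightarrow> nat option)" where
  "fI V I n par = (\<lambda>v. if v \<in> V - I then (if v = n then par (the (par n)) else par v) else None)"

lemma Dset_back: "par v = Some u \<Longrightarrow> u \<in> Dset par x \<Longrightarrow> v \<in> Dset par x"
  unfolding Dset_def using converse_rtrancl_into_rtrancl[of v u "par_edges par" x] by simp

lemma Dset_step: assumes "v \<in> Dset par x" "v \<noteq> x" "par v = Some u" shows "u \<in> Dset par x"
proof -
  obtain u' where "par v = Some u'" "(u',x) \<in> (par_edges par)\<^sup>*"
    using step_from[of v x par] assms unfolding Dset_def by blast
  then show ?thesis using assms(3) unfolding Dset_def by simp
qed

lemma Dset_trans: "(v,y) \<in> (par_edges par)\<^sup>* \<Longrightarrow> y \<in> Dset par x \<Longrightarrow> v \<in> Dset par x"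
  unfolding Dset_def using rtrancl_trans[of v y "par_edges par" x] by simp

lemma Dset_self: "x \<in> Dset par x" unfolding Dset_def by simp

lemma Dset_V: assumes "forestV V par" "x \<in> V" shows "Dset par x \<subseteq> V"
proof
  fix v assume "v \<in> Dset par x"
  show "v \<in> V"
  proof (cases "v = x")
    case True then show ?thesis using assms by simp
  next
    case False
    then obtain u where "par v = Some u" using step_from[of v x par] \<open>v \<in> Dset par x\<close>
      unfolding Dset_def by blast
    then show ?thesis using forest_closed(1)[OF assms(1)] by blast
  qed
qed

context
  fixes l k V n par x
  assumes P: "par \<in> bset l k V n" and px: "par n = Some x" and nV: "n \<in> V" and finV: "finite V"
begin

lemma F: "forestV V par" using P unfolding bset_def by blast

lemma chn: "children par n = {}" using P unfolding bset_def by blast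
lemma nc: "par v \<noteq> Some n" using chn unfolding children_def by blast

lemma xV: "x \<in> V" using forest_closed(2)[OF F px] .

lemma xn: "x \<noteq> n" using nc[of n] px by auto

lemma nD: "n \<in> Dset par x" using Dset_back[of par n x x, OF px Dset_self] .

lemma DV: "Dset par x \<subseteq> V" using Dset_V[OF F xV] .

lemma I_props: "x \<in> Dset par x - {n}" "Dset par x - {n} \<subseteq> V - {n}"
  using Dset_self xn DV by auto

lemma px_notD: "par x = Some u \<Longrightarrow> u \<notin> Dset par x"
proof
  assume a: "par x = Some u" "u \<in> Dset par x"
  then have "(x,u) \<in> (par_edges par)\<^sup>*" "(u,x) \<in> (par_edges par)\<^sup>*" unfolding Dset_def by auto
  then have "x = u" using forest_antisym[OF F] by blast
  then have "(x,x) \<in> (par_edges par)\<^sup>+" using a by auto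
  then show False using forest_no_cycle[OF F] by blast
qed

lemma tI_eq: "tI (Dset par x - {n}) par n = (\<lambda>v. if v \<in> Dset par x - {n} \<and> v \<noteq> x then par v else None)"
proof
  fix v show "tI (Dset par x - {n}) par n v = (if v \<in> Dset par x - {n} \<and> v \<noteq> x then par v else None)"
    unfolding tI_def px by (cases "v = x") simp_all
qed

lemma tI_rtree: "tI (Dset par x - {n}) par n \<in> rtreeAt (Dset par x - {n}) x"
proof -
  let ?I = "Dset par x - {n}" and ?t = "tI (Dset par x - {n}) par n"
  have t: "\<And>v. ?t v = (if v \<in> ?I \<and> v \<noteq> x then par v else None)" by (simp add: tI_eq)
  have cl: "u \<in> ?I" if "v \<in> ?I" "v \<noteq> x" "par v = Some u" for v u
  proof -
    have "u \<in> Dset par x" using Dset_step[of v par x u] that by blast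
    moreover have "u \<noteq> n" using nc[of v] that by blast
    ultimately show ?thesis by blast
  qed
  have nn: "par v \<noteq> None" if "v \<in> ?I" "v \<noteq> x" for v
  proof -
    have "(v,x) \<in> (par_edges par)\<^sup>*" using that unfolding Dset_def by blast
    then show ?thesis using step_from[of v x par] that by force
  qed
  have xI: "x \<in> ?I" using I_props by blast
  have R: "rootsV ?I ?t = {x}"
  proof
    show "rootsV ?I ?t \<subseteq> {x}"
    proof
      fix v assume "v \<in> rootsV ?I ?t"
      then have "v \<in> ?I" "?t v = None" unfolding rootsV_def by auto
      then show "v \<in> {x}" using t[of v] nn[of v] by (cases "v = x") auto
    qed
    show "{x} \<subseteq> rootsV ?I ?t" using xI t[of x] unfolding rootsV_def by simp
  qed
  have reach: "(v,x) \<in> (par_edges ?t)\<^sup>*" if vI: "v \<in> ?I" for v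
  proof -
    have "(v,x) \<in> (par_edges par)\<^sup>*" using vI unfolding Dset_def by simp
    then show ?thesis using vI
    proof (induction rule: converse_rtrancl_induct)
      case base then show ?case by simp
    next
      case (step v w)
      show ?case
      proof (cases "v = x")
        case True then show ?thesis by simp
      next
        case False
        have pv: "par v = Some w" using step(1) by simp
        then have wI: "w \<in> ?I" using cl[of v w] step(4) False by blast
        have "?t v = Some w" using t[of v] step(4) False pv by simp
        then have "(v,w) \<in> par_edges ?t" by simp
        moreover have "(w,x) \<in> (par_edges ?t)\<^sup>*" using step(3) wI by blast
        ultimately show ?thesis by (rule converse_rtrancl_into_rtrancl)
      qed
    qed
  qed
  have "forestV ?I ?t"
    unfolding forestV_def
  proof (intro conjI ballI allI impI)
    fix v assume "v \<notin> ?I" then show "?t v = None" using t[of v] by auto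
  next
    fix v u assume a: "v \<in> ?I" "?t v = Some u"
    then have "v \<noteq> x" "par v = Some u" using t[of v] by (auto split: if_splits)
    then show "u \<in> ?I" using cl a(1) by blast
  next
    fix v assume "v \<in> ?I" then show "\<exists>r\<in>rootsV ?I ?t. (v, r) \<in> (par_edges ?t)\<^sup>*"
      using reach R by blast
  qed
  then show ?thesis unfolding rtreeAt_def using R by blast
qed

lemma fI_eq: "fI V (Dset par x - {n}) n par v = (if v \<in> V - (Dset par x - {n}) then (if v = n then par x else par v) else None)"
  unfolding fI_def px by simp

lemma fI_avoid:
  assumes "(v,y) \<in> (par_edges par)\<^sup>*" "v \<notin> Dset par x"
  shows "(v,y) \<in> (par_edges (fI V (Dset par x - {n}) n par))\<^sup>* \<and> y \<notin> Dset par x"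
  using assms
proof (induction rule: converse_rtrancl_induct)
  case base then show ?case by simp
next
  case (step v w)
  have pv: "par v = Some w" using step(1) by simp
  have wD: "w \<notin> Dset par x" using Dset_back[of par v w x] pv step(4) by blast
  have vV: "v \<in> V" using forest_closed(1)[OF F pv] .
  have vn: "v \<noteq> n" using nD step(4) by blast
  have "fI V (Dset par x - {n}) n par v = Some w" using fI_eq[of v] vV vn step(4) pv by simp
  then have "(v,w) \<in> par_edges (fI V (Dset par x - {n}) n par)" by simp
  then show ?case using step(3)[OF wD] by (meson converse_rtrancl_into_rtrancl)
qed

lemma fI_roots: "r \<in> rootsV (V - (Dset par x - {n})) (fI V (Dset par x - {n}) n par) \<longleftrightarrow>
   (r = n \<and> par x = None) \<or> (r \<in> rootsV V par \<and> r \<noteq> x)"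
proof
  assume r: "r \<in> rootsV (V - (Dset par x - {n})) (fI V (Dset par x - {n}) n par)"
  then have rV: "r \<in> V - (Dset par x - {n})" and rn: "fI V (Dset par x - {n}) n par r = None"
    unfolding rootsV_def by auto
  show "(r = n \<and> par x = None) \<or> (r \<in> rootsV V par \<and> r \<noteq> x)"
  proof (cases "r = n")
    case True
    have "fI V (Dset par x - {n}) n par n = par x" using fI_eq[of n] nV by simp
    then show ?thesis using rn True by simp
  next
    case False
    then have "par r = None" "r \<noteq> x" using rn fI_eq[of r] rV Dset_self by auto
    then show ?thesis using rV unfolding rootsV_def by auto
  qed
next
  assume a: "(r = n \<and> par x = None) \<or> (r \<in> rootsV V par \<and> r \<noteq> x)"
  show "r \<in> rootsV (V - (Dset par x - {n})) (fI V (Dset par x - {n}) n par)"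
  proof (cases "r = n")
    case True
    then have "par x = None" using a px by (auto simp: rootsV_def)
    moreover have "fI V (Dset par x - {n}) n par n = par x" using fI_eq[of n] nV by simp
    ultimately show ?thesis using True nV unfolding rootsV_def by auto
  next
    case False
    then have r: "r \<in> rootsV V par" "r \<noteq> x" using a by auto
    have "r \<notin> Dset par x"
    proof
      assume "r \<in> Dset par x"
      then have "(r,x) \<in> (par_edges par)\<^sup>*" unfolding Dset_def by simp
      then show False using root_reach_eq[OF r(1)] r(2) by blast
    qed
    then show ?thesis using r False fI_eq[of r] unfolding rootsV_def by auto
  qed
qed

lemma root_par_n: "par x = None \<Longrightarrow> root_ofV V par n = x"
  by (rule root_ofV_eq[OF F]) (use xV px in \<open>auto simp: rootsV_def\<close>)

lemma fI_forest: "forestV (V - (Dset par x - {n})) (fI V (Dset par x - {n}) n par)"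
  unfolding forestV_def
proof (intro conjI ballI allI impI)
  let ?F = "fI V (Dset par x - {n}) n par" and ?W = "V - (Dset par x - {n})"
  fix v assume "v \<notin> ?W" then show "?F v = None" using fI_eq[of v] by auto
next
  let ?F = "fI V (Dset par x - {n}) n par" and ?W = "V - (Dset par x - {n})"
  fix v u assume a: "v \<in> ?W" "?F v = Some u"
  show "u \<in> ?W"
  proof (cases "v = n")
    case True
    then have "par x = Some u" using a fI_eq[of v] by simp
    then show ?thesis using px_notD forest_closed(2)[OF F] by blast
  next
    case False
    then have pv: "par v = Some u" and vD: "v \<notin> Dset par x" using a fI_eq[of v] by auto
    then have "u \<notin> Dset par x" using Dset_back[of par v u x] by blast
    then show ?thesis using forest_closed(2)[OF F pv] by blast
  qed
next
  let ?F = "fI V (Dset par x - {n}) n par" and ?W = "V - (Dset par x - {n})"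
  have gen: "\<exists>r\<in>rootsV ?W ?F. (v, r) \<in> (par_edges ?F)\<^sup>*" if v: "v \<in> V" "v \<notin> Dset par x" for v
  proof -
    obtain r where r: "r \<in> rootsV V par" "(v,r) \<in> (par_edges par)\<^sup>*" using forest_reach_root[OF F v(1)] by blast
    then have "(v,r) \<in> (par_edges ?F)\<^sup>*" "r \<notin> Dset par x" using fI_avoid v(2) by blast+
    moreover have "r \<noteq> x" using \<open>r \<notin> Dset par x\<close> Dset_self by blast
    ultimately show ?thesis using fI_roots r(1) by blast
  qed
  fix v assume v: "v \<in> ?W"
  show "\<exists>r\<in>rootsV ?W ?F. (v, r) \<in> (par_edges ?F)\<^sup>*"
  proof (cases "v = n")
    case False
    then show ?thesis using v gen by blast
  next
    case True
    show ?thesis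
    proof (cases "par x")
      case None
      then have "n \<in> rootsV ?W ?F" using fI_roots by blast
      then show ?thesis using True by blast
    next
      case (Some u)
      then have u: "u \<in> V" "u \<notin> Dset par x" using px_notD forest_closed(2)[OF F] by blast+
      then obtain r where "r \<in> rootsV ?W ?F" "(u, r) \<in> (par_edges ?F)\<^sup>*" using gen by blast
      moreover have "?F n = Some u" using fI_eq[of n] nV Some by simp
      ultimately show ?thesis using True by (meson converse_rtrancl_into_rtrancl par_edges_iff)
    qed
  qed
qed

lemma other_root:
  assumes r: "r \<in> rootsV V par" "r \<noteq> root_ofV V par n"
  shows "r \<noteq> x" "(x,r) \<notin> (par_edges par)\<^sup>*" "v \<in> Dset par r \<Longrightarrow> v \<notin> Dset par x"
proof -
  have nx: "(n,x) \<in> (par_edges par)\<^sup>*" using px by auto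
  show xr: "(x,r) \<notin> (par_edges par)\<^sup>*"
  proof
    assume "(x,r) \<in> (par_edges par)\<^sup>*"
    then have "(n,r) \<in> (par_edges par)\<^sup>*" using nx by simp
    then show False using root_ofV_eq[OF F r(1)] r(2) by blast
  qed
  show rx: "r \<noteq> x" using xr by auto
  assume v: "v \<in> Dset par r"
  show "v \<notin> Dset par x"
  proof
    assume "v \<in> Dset par x"
    then have "(v,x) \<in> (par_edges par)\<^sup>*" "(v,r) \<in> (par_edges par)\<^sup>*" using v unfolding Dset_def by auto
    then have "(x,r) \<in> (par_edges par)\<^sup>* \<or> (r,x) \<in> (par_edges par)\<^sup>*" by (rule reach_linear)
    then show False using xr root_reach_eq[OF r(1)] rx by blast
  qed
qed

lemma fI_MD:
  assumes r: "r \<in> rootsV V par" "r \<noteq> root_ofV V par n"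
  shows "MD (fI V (Dset par x - {n}) n par) r = MD par r"
proof -
  let ?F = "fI V (Dset par x - {n}) n par" and ?W = "V - (Dset par x - {n})"
  have rx: "r \<noteq> x" using other_root(1)[OF r] .
  have rF: "r \<in> rootsV ?W ?F" using fI_roots r(1) rx by blast
  have n1: "par r = None" using r(1) unfolding rootsV_def by simp
  have n2: "?F r = None" using rF unfolding rootsV_def by simp
  have "DD par r = DD ?F r"
  proof (rule DD_agree(1)[of r "Dset par r"])
    show "r \<in> Dset par r" by (rule Dset_self)
    show "\<forall>v\<in>Dset par r - {r}. ?F v = par v"
    proof
      fix v assume v: "v \<in> Dset par r - {r}"
      then have vD: "v \<notin> Dset par x" using other_root(3)[OF r] by blast
      obtain u where "par v = Some u" using step_from[of v r par] v unfolding Dset_def by blast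
      then have "v \<in> V" using forest_closed(1)[OF F] by blast
      moreover have "v \<noteq> n" using vD nD by blast
      ultimately show "?F v = par v" using fI_eq[of v] vD by simp
    qed
    show "\<forall>v u. par v = Some u \<longrightarrow> u \<in> Dset par r \<longrightarrow> v < u \<longrightarrow> v \<in> Dset par r"
      using Dset_back by blast
    show "\<forall>v u. ?F v = Some u \<longrightarrow> u \<in> Dset par r \<longrightarrow> v < u \<longrightarrow> v \<in> Dset par r"
    proof (intro allI impI)
      fix v u assume a: "?F v = Some u" "u \<in> Dset par r"
      show "v \<in> Dset par r"
      proof (cases "v = n")
        case True
        then have "par x = Some u" using a fI_eq[of v] by (auto split: if_splits)
        then have "x \<in> Dset par r" using Dset_back a(2) by blast
        then show ?thesis using other_root(2)[OF r] unfolding Dset_def by blast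
      next
        case False
        then have "par v = Some u" using a fI_eq[of v] by (auto split: if_splits)
        then show ?thesis using Dset_back a(2) by blast
      qed
    qed
  qed
  then show ?thesis using MD_eq[of par r, OF n1] MD_eq[of ?F r, OF n2] by simp
qed

lemma fI_root_set:
  "rootsV (V - (Dset par x - {n})) (fI V (Dset par x - {n}) n par)
     - {root_ofV (V - (Dset par x - {n})) (fI V (Dset par x - {n}) n par) n}
   = rootsV V par - {root_ofV V par n}"
proof -
  let ?F = "fI V (Dset par x - {n}) n par" and ?W = "V - (Dset par x - {n})"
  have FF: "forestV ?W ?F" by (rule fI_forest)
  show ?thesis
  proof (cases "par x")
    case None
    have nF: "n \<in> rootsV ?W ?F" using fI_roots None by blast
    have "root_ofV ?W ?F n = n" by (rule root_ofV_eq[OF FF nF]) simp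
    moreover have "root_ofV V par n = x" using root_par_n None by blast
    moreover have "n \<notin> rootsV V par" using px unfolding rootsV_def by auto
    ultimately show ?thesis using fI_roots None by auto
  next
    case (Some u)
    let ?\<rho> = "root_ofV V par n"
    have \<rho>: "?\<rho> \<in> rootsV V par" "(n, ?\<rho>) \<in> (par_edges par)\<^sup>*" using root_ofV[OF F nV] by auto
    have "n \<noteq> ?\<rho>" using \<rho>(1) px unfolding rootsV_def by auto
    then have x\<rho>: "(x, ?\<rho>) \<in> (par_edges par)\<^sup>*" using step_from[OF \<rho>(2)] px by auto
    have "x \<noteq> ?\<rho>" using \<rho>(1) Some unfolding rootsV_def by auto
    then have u\<rho>: "(u, ?\<rho>) \<in> (par_edges par)\<^sup>*" using step_from[OF x\<rho>] Some by auto
    have uD: "u \<notin> Dset par x" using px_notD Some by blast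
    have "(u, ?\<rho>) \<in> (par_edges ?F)\<^sup>*" using fI_avoid[OF u\<rho> uD] by blast
    moreover have "?F n = Some u" using fI_eq[of n] nV Some by simp
    ultimately have "(n, ?\<rho>) \<in> (par_edges ?F)\<^sup>*" by (meson converse_rtrancl_into_rtrancl par_edges_iff)
    moreover have "?\<rho> \<in> rootsV ?W ?F" using fI_roots \<rho>(1) \<open>x \<noteq> ?\<rho>\<close> by auto
    ultimately have "root_ofV ?W ?F n = ?\<rho>" using root_ofV_eq[OF FF] by blast
    moreover have "x \<notin> rootsV V par" using Some unfolding rootsV_def by auto
    ultimately show ?thesis using fI_roots Some by auto
  qed
qed

lemma fI_bset: "fI V (Dset par x - {n}) n par \<in> bset l k (V - (Dset par x - {n})) n"
proof -
  let ?F = "fI V (Dset par x - {n}) n par" and ?W = "V - (Dset par x - {n})"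
  have FF: "forestV ?W ?F" by (rule fI_forest)
  have finR: "finite (rootsV V par)" using finV by (rule finite_subset[rotated]) (auto simp: rootsV_def)
  have cR: "card (rootsV V par) = l + 1" using P unfolding bset_def by blast
  have card: "card (rootsV ?W ?F) = l + 1"
  proof (cases "par x")
    case None
    have "rootsV ?W ?F = insert n (rootsV V par - {x})" using fI_roots None by auto
    moreover have "n \<notin> rootsV V par - {x}" using px unfolding rootsV_def by auto
    moreover have "x \<in> rootsV V par" using None xV unfolding rootsV_def by auto
    ultimately show ?thesis using finR cR by (simp add: card_Diff_singleton)
  next
    case (Some u)
    have "x \<notin> rootsV V par" using Some unfolding rootsV_def by auto
    then have "rootsV ?W ?F = rootsV V par" using fI_roots Some by auto
    then show ?thesis using cR by simp
  qed
  have ch: "children ?F n = {}"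
  proof -
    have "?F v \<noteq> Some n" for v
    proof (cases "v = n")
      case True then show ?thesis using fI_eq[of v] nc[of x] by auto
    next
      case False then show ?thesis using fI_eq[of v] nc[of v] by auto
    qed
    then show ?thesis unfolding children_def by blast
  qed
  have "(\<Sum>r\<in>rootsV ?W ?F - {root_ofV ?W ?F n}. card (MD ?F r))
        = (\<Sum>r\<in>rootsV V par - {root_ofV V par n}. card (MD ?F r))"
    using fI_root_set by simp
  also have "\<dots> = (\<Sum>r\<in>rootsV V par - {root_ofV V par n}. card (MD par r))"
    by (rule sum.cong[OF refl]) (use fI_MD in auto)
  also have "\<dots> = k" using P unfolding bset_def by blast
  finally show ?thesis unfolding bset_def using FF card ch by blast
qed

end


definition glueB :: "nat set \<Rightarrow> nat \<Rightarrow> nat \<Rightarrow> (nat \<Rightarrow> nat option) \<Rightarrow> (nat \<Rightarrow> nat option) \<Rightarrow> (nat \<Rightarrow> nat option)" where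
  "glueB I n x t F = (\<lambda>v. if v \<in> I then (if v = x then F n else t v) else if v = n then Some x else F v)"

context
  fixes l k V n I x t F
  assumes finV: "finite V" and nV: "n \<in> V" and IV: "I \<subseteq> V - {n}"
    and T: "t \<in> rtreeAt I x" and FB: "F \<in> bset l k (V - I) n"
begin

lemma TF: "forestV I t" "rootsV I t = {x}" using T unfolding rtreeAt_def by auto
lemma xI: "x \<in> I" using TF(2) unfolding rootsV_def by auto
lemma tx: "t x = None" using TF(2) unfolding rootsV_def by auto
lemma FF: "forestV (V - I) F" using FB unfolding bset_def by blast
lemma Fnc: "F v \<noteq> Some n" using FB unfolding bset_def children_def by auto
lemma nW: "n \<in> V - I" using nV IV by auto

lemma G_simps:
  "glueB I n x t F x = F n"
  "v \<in> I \<Longrightarrow> v \<noteq> x \<Longrightarrow> glueB I n x t F v = t v"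
  "glueB I n x t F n = Some x"
  "v \<notin> I \<Longrightarrow> v \<noteq> n \<Longrightarrow> glueB I n x t F v = F v"
  unfolding glueB_def using xI nW by auto

lemma RF: "(w, y) \<in> (par_edges F)\<^sup>* \<Longrightarrow> w \<in> V - I \<Longrightarrow> (w, y) \<in> (par_edges (glueB I n x t F))\<^sup>*"
proof (induction rule: converse_rtrancl_induct)
  case base then show ?case by simp
next
  case (step w w')
  have Fw: "F w = Some w'" using step(1) by simp
  have w'W: "w' \<in> V - I" using forest_closed(2)[OF FF Fw] .
  have IH: "(w', y) \<in> (par_edges (glueB I n x t F))\<^sup>*" using step(3) w'W by blast
  show ?case
  proof (cases "w = n")
    case True
    have "(n, x) \<in> par_edges (glueB I n x t F)" using G_simps(3) by simp
    moreover have "(x, w') \<in> par_edges (glueB I n x t F)" using G_simps(1) Fw True by simp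
    ultimately show ?thesis using IH True by (meson converse_rtrancl_into_rtrancl)
  next
    case False
    have "(w, w') \<in> par_edges (glueB I n x t F)" using G_simps(4)[of w] step(4) False Fw by simp
    then show ?thesis using IH by (meson converse_rtrancl_into_rtrancl)
  qed
qed

lemma RT: assumes "v \<in> I" shows "(v, x) \<in> (par_edges (glueB I n x t F))\<^sup>*"
proof -
  obtain r where "r \<in> rootsV I t" "(v,r) \<in> (par_edges t)\<^sup>*" using forest_reach_root[OF TF(1) assms] by blast
  then have vx: "(v,x) \<in> (par_edges t)\<^sup>*" using TF(2) by simp
  show ?thesis using vx assms
  proof (induction rule: converse_rtrancl_induct)
    case base then show ?case by simp
  next
    case (step v w)
    have tv: "t v = Some w" using step(1) by simp
    then have vx: "v \<noteq> x" using tx by auto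
    have wI: "w \<in> I" using forest_closed(2)[OF TF(1) tv] .
    have "(v, w) \<in> par_edges (glueB I n x t F)" using G_simps(2)[OF step(4) vx] tv by simp
    then show ?case using step(3)[OF wI] by (meson converse_rtrancl_into_rtrancl)
  qed
qed

lemma G_roots: "r \<in> rootsV V (glueB I n x t F) \<longleftrightarrow> (r = x \<and> F n = None) \<or> (r \<in> rootsV (V - I) F \<and> r \<noteq> n)"
proof
  assume r: "r \<in> rootsV V (glueB I n x t F)"
  then have rV: "r \<in> V" and g: "glueB I n x t F r = None" unfolding rootsV_def by auto
  show "(r = x \<and> F n = None) \<or> (r \<in> rootsV (V - I) F \<and> r \<noteq> n)"
  proof (cases "r \<in> I")
    case True
    show ?thesis
    proof (cases "r = x")
      case True then show ?thesis using g G_simps(1) by simp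
    next
      case False
      then have "t r = None" using g G_simps(2) \<open>r \<in> I\<close> by simp
      then have "r \<in> rootsV I t" using \<open>r \<in> I\<close> unfolding rootsV_def by simp
      then show ?thesis using TF(2) False by simp
    qed
  next
    case False
    then have "r \<noteq> n" using g G_simps(3) by auto
    then show ?thesis using g G_simps(4)[OF False] rV False unfolding rootsV_def by simp
  qed
next
  assume a: "(r = x \<and> F n = None) \<or> (r \<in> rootsV (V - I) F \<and> r \<noteq> n)"
  then show "r \<in> rootsV V (glueB I n x t F)"
  proof
    assume "r = x \<and> F n = None"
    then show ?thesis using G_simps(1) xI IV unfolding rootsV_def by auto
  next
    assume "r \<in> rootsV (V - I) F \<and> r \<noteq> n"
    then show ?thesis using G_simps(4)[of r] unfolding rootsV_def by auto
  qed
qed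

lemma G_forest: "forestV V (glueB I n x t F)"
  unfolding forestV_def
proof (intro conjI ballI allI impI)
  fix v assume v: "v \<notin> V"
  then have "v \<notin> I" "v \<noteq> n" using IV nV by auto
  then show "glueB I n x t F v = None" using G_simps(4) forest_outside[OF FF] v by simp
next
  fix v u assume v: "v \<in> V" "glueB I n x t F v = Some u"
  show "u \<in> V"
  proof (cases "v \<in> I")
    case True
    show ?thesis
    proof (cases "v = x")
      case True then show ?thesis using v G_simps(1) forest_closed(2)[OF FF, of n u] by simp
    next
      case False then show ?thesis using v G_simps(2) \<open>v \<in> I\<close> forest_closed(2)[OF TF(1), of v u] IV by auto
    qed
  next
    case False
    show ?thesis
    proof (cases "v = n")
      case True then show ?thesis using v G_simps(3) xI IV by auto
    next
      case False then show ?thesis using v G_simps(4) \<open>v \<notin> I\<close> forest_closed(2)[OF FF, of v u] by auto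
    qed
  qed
next
  have genW: "\<exists>r\<in>rootsV V (glueB I n x t F). (w, r) \<in> (par_edges (glueB I n x t F))\<^sup>*" if w: "w \<in> V - I" for w
  proof -
    obtain r where r: "r \<in> rootsV (V - I) F" "(w,r) \<in> (par_edges F)\<^sup>*" using forest_reach_root[OF FF w] by blast
    have wr: "(w,r) \<in> (par_edges (glueB I n x t F))\<^sup>*" using RF[OF r(2) w] .
    show ?thesis
    proof (cases "r = n")
      case False then show ?thesis using r wr G_roots by blast
    next
      case True
      then have "F n = None" using r unfolding rootsV_def by simp
      then have "x \<in> rootsV V (glueB I n x t F)" using G_roots by blast
      moreover have "(w, x) \<in> (par_edges (glueB I n x t F))\<^sup>*" using wr True G_simps(3)
        by (meson par_edges_iff rtrancl.rtrancl_into_rtrancl)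
      ultimately show ?thesis by blast
    qed
  qed
  fix v assume v: "v \<in> V"
  show "\<exists>r\<in>rootsV V (glueB I n x t F). (v, r) \<in> (par_edges (glueB I n x t F))\<^sup>*"
  proof (cases "v \<in> I")
    case False then show ?thesis using v genW by blast
  next
    case True
    obtain r where r: "r \<in> rootsV V (glueB I n x t F)" "(n, r) \<in> (par_edges (glueB I n x t F))\<^sup>*"
      using genW nW by blast
    have "n \<noteq> r" using r(1) G_simps(3) unfolding rootsV_def by auto
    then have "(x, r) \<in> (par_edges (glueB I n x t F))\<^sup>*" using step_from[OF r(2)] G_simps(3) by auto
    then show ?thesis using RT[OF True] r(1) by (meson rtrancl_trans)
  qed
qed

lemma G_ch: "children (glueB I n x t F) n = {}"
proof -
  have "glueB I n x t F v \<noteq> Some n" for v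
  proof (cases "v \<in> I")
    case True
    show ?thesis
    proof (cases "v = x")
      case True then show ?thesis using G_simps(1) Fnc[of n] by simp
    next
      case False
      have "t v \<noteq> Some n" using forest_closed(2)[OF TF(1), of v n] IV by auto
      then show ?thesis using G_simps(2)[OF \<open>v \<in> I\<close> False] by simp
    qed
  next
    case False
    show ?thesis
    proof (cases "v = n")
      case True then show ?thesis using G_simps(3) xI IV by auto
    next
      case False then show ?thesis using G_simps(4) \<open>v \<notin> I\<close> Fnc[of v] by simp
    qed
  qed
  then show ?thesis unfolding children_def by blast
qed

lemma G_card: "card (rootsV V (glueB I n x t F)) = l + 1"
proof -
  have finR: "finite (rootsV (V - I) F)" using finV by (rule finite_subset[rotated]) (auto simp: rootsV_def)
  have cR: "card (rootsV (V - I) F) = l + 1" using FB unfolding bset_def by blast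
  have xR: "x \<notin> rootsV (V - I) F" using xI unfolding rootsV_def by auto
  show ?thesis
  proof (cases "F n")
    case None
    have "rootsV V (glueB I n x t F) = insert x (rootsV (V - I) F - {n})" using G_roots None by auto
    moreover have "n \<in> rootsV (V - I) F" using None nW unfolding rootsV_def by auto
    ultimately show ?thesis using finR cR xR by (simp add: card_Diff_singleton)
  next
    case (Some u)
    have "n \<notin> rootsV (V - I) F" using Some unfolding rootsV_def by auto
    then have "rootsV V (glueB I n x t F) = rootsV (V - I) F" using G_roots Some by auto
    then show ?thesis using cR by simp
  qed
qed

lemma G_root_set: "rootsV V (glueB I n x t F) - {root_ofV V (glueB I n x t F) n}
   = rootsV (V - I) F - {root_ofV (V - I) F n}"
proof -
  let ?G = "glueB I n x t F"
  have xR: "x \<notin> rootsV (V - I) F" using xI unfolding rootsV_def by auto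
  show ?thesis
  proof (cases "F n")
    case None
    have nR: "n \<in> rootsV (V - I) F" using None nW unfolding rootsV_def by auto
    have "root_ofV (V - I) F n = n" by (rule root_ofV_eq[OF FF nR]) simp
    moreover have "root_ofV V ?G n = x"
      by (rule root_ofV_eq[OF G_forest]) (use G_roots None G_simps(3) in auto)
    ultimately show ?thesis using G_roots None xR by auto
  next
    case (Some u)
    let ?\<rho> = "root_ofV (V - I) F n"
    have \<rho>: "?\<rho> \<in> rootsV (V - I) F" "(n, ?\<rho>) \<in> (par_edges F)\<^sup>*" using root_ofV[OF FF nW] by auto
    have "?\<rho> \<noteq> n" using \<rho>(1) Some unfolding rootsV_def by auto
    then have "?\<rho> \<in> rootsV V ?G" using G_roots \<rho>(1) by blast
    moreover have "(n, ?\<rho>) \<in> (par_edges ?G)\<^sup>*" using RF[OF \<rho>(2) nW] .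
    ultimately have "root_ofV V ?G n = ?\<rho>" using root_ofV_eq[OF G_forest] by blast
    moreover have "n \<notin> rootsV (V - I) F" using Some unfolding rootsV_def by auto
    ultimately show ?thesis using G_roots Some by auto
  qed
qed

lemma S_props:
  assumes r: "r \<in> rootsV (V - I) F" "r \<noteq> root_ofV (V - I) F n" and u: "u \<in> Dset F r"
  shows "u \<in> V - I" "u \<noteq> n"
proof -
  show "u \<noteq> n"
  proof
    assume "u = n"
    then have "(n, r) \<in> (par_edges F)\<^sup>*" using u unfolding Dset_def by simp
    then show False using root_ofV_eq[OF FF r(1)] r(2) by blast
  qed
  show "u \<in> V - I"
  proof (cases "u = r")
    case True then show ?thesis using r unfolding rootsV_def by auto
  next
    case False
    then obtain w where "F u = Some w" using step_from[of u r F] u unfolding Dset_def by blast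
    then show ?thesis using forest_closed(1)[OF FF] by blast
  qed
qed

lemma G_MD:
  assumes r: "r \<in> rootsV (V - I) F" "r \<noteq> root_ofV (V - I) F n"
  shows "MD (glueB I n x t F) r = MD F r"
proof -
  let ?G = "glueB I n x t F"
  have rn: "r \<noteq> n" using S_props(2)[OF r Dset_self] .
  have rG: "r \<in> rootsV V ?G" using G_roots r(1) rn by blast
  have n1: "F r = None" using r(1) unfolding rootsV_def by simp
  have n2: "?G r = None" using rG unfolding rootsV_def by simp
  have "DD F r = DD ?G r"
  proof (rule DD_agree(1)[of r "Dset F r"])
    show "r \<in> Dset F r" by (rule Dset_self)
    show "\<forall>v\<in>Dset F r - {r}. ?G v = F v"
    proof
      fix v assume v: "v \<in> Dset F r - {r}"
      then have "v \<in> V - I" "v \<noteq> n" using S_props[OF r] by auto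
      then show "?G v = F v" using G_simps(4) by simp
    qed
    show "\<forall>v u. F v = Some u \<longrightarrow> u \<in> Dset F r \<longrightarrow> v < u \<longrightarrow> v \<in> Dset F r"
      using Dset_back by blast
    show "\<forall>v u. ?G v = Some u \<longrightarrow> u \<in> Dset F r \<longrightarrow> v < u \<longrightarrow> v \<in> Dset F r"
    proof (intro allI impI)
      fix v u assume a: "?G v = Some u" "u \<in> Dset F r"
      have uW: "u \<in> V - I" and un: "u \<noteq> n" using S_props[OF r a(2)] by auto
      show "v \<in> Dset F r"
      proof (cases "v \<in> I")
        case True
        show ?thesis
        proof (cases "v = x")
          case True
          then have "F n = Some u" using a G_simps(1) by simp
          then have "n \<in> Dset F r" using Dset_back a(2) by blast
          then show ?thesis using S_props(2)[OF r] by blast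
        next
          case False
          then have "t v = Some u" using a G_simps(2)[OF \<open>v \<in> I\<close>] by simp
          then have "u \<in> I" using forest_closed(2)[OF TF(1)] by blast
          then show ?thesis using uW by blast
        qed
      next
        case False
        show ?thesis
        proof (cases "v = n")
          case True then have "u = x" using a G_simps(3) by simp
          then show ?thesis using uW xI by blast
        next
          case False
          then have "F v = Some u" using a G_simps(4) \<open>v \<notin> I\<close> by simp
          then show ?thesis using Dset_back a(2) by blast
        qed
      qed
    qed
  qed
  then show ?thesis using MD_eq[of F r, OF n1] MD_eq[of ?G r, OF n2] by simp
qed

lemma G_bset: "glueB I n x t F \<in> bset l k V n"
proof -
  let ?G = "glueB I n x t F"
  have "(\<Sum>r\<in>rootsV V ?G - {root_ofV V ?G n}. card (MD ?G r))
        = (\<Sum>r\<in>rootsV (V - I) F - {root_ofV (V - I) F n}. card (MD ?G r))"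
    using G_root_set by simp
  also have "\<dots> = (\<Sum>r\<in>rootsV (V - I) F - {root_ofV (V - I) F n}. card (MD F r))"
    by (rule sum.cong[OF refl]) (use G_MD in auto)
  also have "\<dots> = k" using FB unfolding bset_def by blast
  finally show ?thesis unfolding bset_def using G_forest G_card G_ch by blast
qed

lemma G_D: "Dset (glueB I n x t F) x - {n} = I"
proof
  show "I \<subseteq> Dset (glueB I n x t F) x - {n}" using RT IV unfolding Dset_def by auto
  have gen: "(v, y) \<in> (par_edges (glueB I n x t F))\<^sup>* \<Longrightarrow> v \<notin> I \<Longrightarrow> v \<noteq> n \<Longrightarrow> y \<notin> I \<and> y \<noteq> n" for v y
  proof (induction rule: rtrancl_induct)
    case base then show ?case by simp
  next
    case (step y z)
    then have yy: "y \<notin> I" "y \<noteq> n" by auto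
    then have Fy: "F y = Some z" using step(2) G_simps(4) by simp
    then have "y \<in> V - I" "z \<in> V - I" using forest_closed[OF FF Fy] by auto
    moreover have "z \<noteq> n" using Fnc[of y] Fy by auto
    ultimately show ?case by auto
  qed
  show "Dset (glueB I n x t F) x - {n} \<subseteq> I"
  proof
    fix v assume v: "v \<in> Dset (glueB I n x t F) x - {n}"
    show "v \<in> I"
    proof (rule ccontr)
      assume "v \<notin> I"
      then have "x \<notin> I" using gen[of v x] v unfolding Dset_def by auto
      then show False using xI by blast
    qed
  qed
qed

end


definition pieceB :: "nat \<Rightarrow> nat \<Rightarrow> nat set \<Rightarrow> nat \<Rightarrow> nat set \<Rightarrow> (nat \<Rightarrow> nat option) set" where
  "pieceB l k V n I = {par \<in> bset l k V n. par n \<noteq> None \<and> Dset par (the (par n)) - {n} = I}"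

lemma pieceB_card:
  assumes finV: "finite V" and nV: "n \<in> V" and IV: "I \<subseteq> V - {n}"
  shows "card (pieceB l k V n I) = card (rtrees I) * card (bset l k (V - I) n)"
proof -
  let ?f = "\<lambda>par. (tI I par n, fI V I n par)"
  let ?g = "\<lambda>(t, F). glueB I n (the_elem (rootsV I t)) t F"
  have "bij_betw ?f (pieceB l k V n I) (rtrees I \<times> bset l k (V - I) n)"
  proof (rule bij_betw_byWitness[where f' = ?g])
    show "\<forall>a\<in>pieceB l k V n I. ?g (?f a) = a"
    proof
      fix par assume p: "par \<in> pieceB l k V n I"
      then obtain x where px: "par n = Some x" and P: "par \<in> bset l k V n"
        and I: "I = Dset par x - {n}" unfolding pieceB_def by auto
      have tr: "tI I par n \<in> rtreeAt I x" using tI_rtree[OF P px nV finV] I by simp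
      then have te: "the_elem (rootsV I (tI I par n)) = x" unfolding rtreeAt_def by simp
      have F: "forestV V par" using P unfolding bset_def by blast
      have nI: "n \<notin> I" using I by blast
      show "?g (?f par) = par"
      proof
        fix v
        show "?g (?f par) v = par v"
        proof (cases "v \<in> I")
          case True then show ?thesis using te px nV nI
            unfolding glueB_def tI_def fI_def by auto
        next
          case False
          show ?thesis
          proof (cases "v = n")
            case True then show ?thesis using te px nI unfolding glueB_def by simp
          next
            case False
            then show ?thesis using te \<open>v \<notin> I\<close> forest_outside[OF F, of v]
              unfolding glueB_def fI_def by auto
          qed
        qed
      qed
    qed
    show "\<forall>a'\<in>rtrees I \<times> bset l k (V - I) n. ?f (?g a') = a'"
    proof
      fix a' assume a': "a' \<in> rtrees I \<times> bset l k (V - I) n"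
      then obtain t F where a: "a' = (t, F)" "t \<in> rtrees I" "F \<in> bset l k (V - I) n" by blast
      then have "card (rootsV I t) = 1" unfolding rtrees_def by blast
      then obtain x where rx: "rootsV I t = {x}" by (rule card_1_singletonE)
      then have T: "t \<in> rtreeAt I x" using a unfolding rtrees_def rtreeAt_def by auto
      have te: "the_elem (rootsV I t) = x" using rx by simp
      have FF: "forestV (V - I) F" using a unfolding bset_def by blast
      have TF: "forestV I t" using T unfolding rtreeAt_def by blast
      have tx: "t x = None" using rx unfolding rootsV_def by auto
      have xI: "x \<in> I" using rx unfolding rootsV_def by auto
      have nI: "n \<notin> I" using IV by blast
      have "tI I (glueB I n x t F) n = t"
      proof
        fix v show "tI I (glueB I n x t F) n v = t v"
          using tx nI forest_outside[OF TF, of v] unfolding tI_def glueB_def by auto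
      qed
      moreover have "fI V I n (glueB I n x t F) = F"
      proof
        fix v show "fI V I n (glueB I n x t F) v = F v"
          using xI nI forest_outside[OF FF, of v] unfolding fI_def glueB_def by auto
      qed
      ultimately show "?f (?g a') = a'" using a te by simp
    qed
    show "?f ` pieceB l k V n I \<subseteq> rtrees I \<times> bset l k (V - I) n"
    proof
      fix y assume "y \<in> ?f ` pieceB l k V n I"
      then obtain par where p: "par \<in> pieceB l k V n I" "y = ?f par" by blast
      then obtain x where px: "par n = Some x" and P: "par \<in> bset l k V n"
        and I: "I = Dset par x - {n}" unfolding pieceB_def by auto
      have "tI I par n \<in> rtreeAt I x" using tI_rtree[OF P px nV finV] I by simp
      then have "tI I par n \<in> rtrees I" unfolding rtreeAt_def rtrees_def by simp
      moreover have "fI V I n par \<in> bset l k (V - I) n" using fI_bset[OF P px nV finV] I by simp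
      ultimately show "y \<in> rtrees I \<times> bset l k (V - I) n" using p by simp
    qed
    show "?g ` (rtrees I \<times> bset l k (V - I) n) \<subseteq> pieceB l k V n I"
    proof
      fix y assume "y \<in> ?g ` (rtrees I \<times> bset l k (V - I) n)"
      then obtain t F where a: "y = ?g (t, F)" "t \<in> rtrees I" "F \<in> bset l k (V - I) n" by blast
      then have "card (rootsV I t) = 1" unfolding rtrees_def by blast
      then obtain x where rx: "rootsV I t = {x}" by (rule card_1_singletonE)
      then have T: "t \<in> rtreeAt I x" using a unfolding rtrees_def rtreeAt_def by auto
      have te: "the_elem (rootsV I t) = x" using rx by simp
      have y: "y = glueB I n x t F" using a te by simp
      have "glueB I n x t F \<in> bset l k V n" by (rule G_bset[OF finV nV IV T a(3)])
      moreover have "glueB I n x t F n = Some x" by (rule G_simps(3)[OF finV nV IV T a(3)])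
      moreover have "Dset (glueB I n x t F) x - {n} = I" by (rule G_D[OF finV nV IV T a(3)])
      ultimately show "y \<in> pieceB l k V n I" unfolding pieceB_def y by simp
    qed
  qed
  then show ?thesis by (simp add: bij_betw_same_card card_cartesian_product)
qed


lemma bset_rec:
  assumes finV: "finite V" and nV: "n \<in> V"
  shows "card (bset l k V n) = card (fset l k (V - {n})) +
     (\<Sum>I\<in>{I. I \<subseteq> V - {n} \<and> I \<noteq> {}}. card (rtrees I) * card (bset l k (V - I) n))"
proof -
  let ?Z = "{I. I \<subseteq> V - {n} \<and> I \<noteq> {}}"
  let ?A = "{par \<in> bset l k V n. par n = None}"
  have split: "bset l k V n = ?A \<union> (\<Union>I\<in>?Z. pieceB l k V n I)"
  proof
    show "bset l k V n \<subseteq> ?A \<union> (\<Union>I\<in>?Z. pieceB l k V n I)"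
    proof
      fix par assume p: "par \<in> bset l k V n"
      show "par \<in> ?A \<union> (\<Union>I\<in>?Z. pieceB l k V n I)"
      proof (cases "par n")
        case None then show ?thesis using p by blast
      next
        case (Some x)
        have "Dset par x - {n} \<in> ?Z" using I_props[OF p Some nV finV] by auto
        moreover have "par \<in> pieceB l k V n (Dset par x - {n})" using p Some unfolding pieceB_def by simp
        ultimately show ?thesis by blast
      qed
    qed
    show "?A \<union> (\<Union>I\<in>?Z. pieceB l k V n I) \<subseteq> bset l k V n" unfolding pieceB_def by blast
  qed
  have finB: "finite (bset l k V n)" unfolding bset_def using finite_forests[OF finV] by simp
  have "?Z \<subseteq> Pow V" by blast
  then have finZ: "finite ?Z" using finV by (meson finite_Pow_iff finite_subset)
  have subP: "pieceB l k V n I \<subseteq> bset l k V n" for I unfolding pieceB_def by blast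
  have finP: "\<forall>I\<in>?Z. finite (pieceB l k V n I)"
    using finB subP finite_subset by blast
  have disjP: "\<forall>I\<in>?Z. \<forall>J\<in>?Z. I \<noteq> J \<longrightarrow> pieceB l k V n I \<inter> pieceB l k V n J = {}"
    unfolding pieceB_def by blast
  have "card (bset l k V n) = card ?A + card (\<Union>I\<in>?Z. pieceB l k V n I)"
  proof -
    have f1: "finite ?A" using finB by (rule finite_subset[rotated]) blast
    have f2: "finite (\<Union>I\<in>?Z. pieceB l k V n I)" using finB by (rule finite_subset[rotated]) (use subP in blast)
    have d: "?A \<inter> (\<Union>I\<in>?Z. pieceB l k V n I) = {}" unfolding pieceB_def by blast
    show ?thesis by (subst split) (rule card_Un_disjoint[OF f1 f2 d])
  qed
  also have "card (\<Union>I\<in>?Z. pieceB l k V n I) = (\<Sum>I\<in>?Z. card (pieceB l k V n I))"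
    by (rule card_UN_disjoint[OF finZ]) (use finP disjP in auto)
  also have "\<dots> = (\<Sum>I\<in>?Z. card (rtrees I) * card (bset l k (V - I) n))"
    by (rule sum.cong[OF refl]) (use pieceB_card[OF finV nV] in auto)
  also have "card ?A = card (fset l k (V - {n}))" using bset_isolated[OF finV nV] by simp
  finally show ?thesis .
qed


definition cut :: "nat \<Rightarrow> (nat \<Rightarrow> nat option) \<Rightarrow> (nat \<Rightarrow> nat option)" where
  "cut n par = (\<lambda>v. if par v = Some n then None else par v)"

definition attach :: "nat set \<Rightarrow> nat \<Rightarrow> (nat \<Rightarrow> nat option) \<Rightarrow> (nat \<Rightarrow> nat option)" where
  "attach W n G = (\<lambda>v. if v \<in> rootsV W G then Some n else G v)"

lemma DD_split:
  "DD par r = insert r (\<Union>c\<in>{c. par c = Some r \<and> c < r}. DD par c)"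
proof
  show "DD par r \<subseteq> insert r (\<Union>c\<in>{c. par c = Some r \<and> c < r}. DD par c)"
  proof
    fix v assume "v \<in> DD par r"
    then have "(v,r) \<in> (dec par)\<^sup>*" unfolding DD_def by simp
    then show "v \<in> insert r (\<Union>c\<in>{c. par c = Some r \<and> c < r}. DD par c)"
    proof (cases rule: rtranclE)
      case base then show ?thesis by simp
    next
      case (step c)
      then show ?thesis unfolding DD_def by auto
    qed
  qed
  show "insert r (\<Union>c\<in>{c. par c = Some r \<and> c < r}. DD par c) \<subseteq> DD par r"
  proof
    fix v assume "v \<in> insert r (\<Union>c\<in>{c. par c = Some r \<and> c < r}. DD par c)"
    then show "v \<in> DD par r"
    proof
      assume "v = r" then show ?thesis unfolding DD_def by simp
    next
      assume "v \<in> (\<Union>c\<in>{c. par c = Some r \<and> c < r}. DD par c)"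
      then obtain c where c: "par c = Some r" "c < r" "(v,c) \<in> (dec par)\<^sup>*" unfolding DD_def by auto
      then have "(c, r) \<in> dec par" by simp
      then show ?thesis using c(3) unfolding DD_def by (meson mem_Collect_eq rtrancl.rtrancl_into_rtrancl)
    qed
  qed
qed

context
  fixes V n par
  assumes F: "forestV V par" and R: "rootsV V par = {n}" and finV: "finite V"
    and nmax: "\<forall>v\<in>V. v \<le> n"
begin

lemma pn: "par n = None" and nV: "n \<in> V" using R unfolding rootsV_def by auto

lemma ch_sub: "c \<in> children par n \<Longrightarrow> c \<in> V - {n} \<and> c < n"
proof -
  assume "c \<in> children par n"
  then have pc: "par c = Some n" unfolding children_def by simp
  then have "c \<in> V" using forest_closed(1)[OF F] by blast
  moreover have "c \<noteq> n" using pc pn by auto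
  ultimately show ?thesis using nmax by force
qed

lemma cut_roots: "rootsV (V - {n}) (cut n par) = children par n"
proof
  show "rootsV (V - {n}) (cut n par) \<subseteq> children par n"
  proof
    fix r assume r: "r \<in> rootsV (V - {n}) (cut n par)"
    then have rV: "r \<in> V" "r \<noteq> n" and c: "cut n par r = None" unfolding rootsV_def by auto
    show "r \<in> children par n"
    proof (cases "par r")
      case None
      then have "r \<in> rootsV V par" using rV unfolding rootsV_def by simp
      then show ?thesis using R rV by simp
    next
      case (Some u) then show ?thesis using c unfolding cut_def children_def by (auto split: if_splits)
    qed
  qed
  show "children par n \<subseteq> rootsV (V - {n}) (cut n par)"
    using ch_sub unfolding rootsV_def cut_def children_def by auto
qed

lemma cut_forest: "forestV (V - {n}) (cut n par)"
  unfolding forestV_def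
proof (intro conjI ballI allI impI)
  fix v assume "v \<notin> V - {n}"
  then show "cut n par v = None" using pn forest_outside[OF F] unfolding cut_def by auto
next
  fix v u assume "v \<in> V - {n}" "cut n par v = Some u"
  then have "par v = Some u" "u \<noteq> n" unfolding cut_def by (auto split: if_splits)
  then show "u \<in> V - {n}" using forest_closed(2)[OF F] by blast
next
  fix v assume v: "v \<in> V - {n}"
  obtain r where "r \<in> rootsV V par" "(v,r) \<in> (par_edges par)\<^sup>*" using forest_reach_root[OF F] v by blast
  then have vn: "(v,n) \<in> (par_edges par)\<^sup>*" using R by simp
  show "\<exists>r\<in>rootsV (V - {n}) (cut n par). (v, r) \<in> (par_edges (cut n par))\<^sup>*"
    using vn v
  proof (induction rule: converse_rtrancl_induct)
    case base then show ?case by simp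
  next
    case (step v w)
    have pv: "par v = Some w" using step(1) by simp
    show ?case
    proof (cases "w = n")
      case True
      then have "v \<in> rootsV (V - {n}) (cut n par)" using cut_roots pv step(4) unfolding children_def by simp
      then show ?thesis by blast
    next
      case False
      have "w \<in> V - {n}" using forest_closed(2)[OF F pv] False by blast
      then obtain r where r: "r\<in>rootsV (V - {n}) (cut n par)" "(w, r) \<in> (par_edges (cut n par))\<^sup>*"
        using step(3) by blast
      have "cut n par v = Some w" using pv False unfolding cut_def by simp
      then have "(v, r) \<in> (par_edges (cut n par))\<^sup>*" using r(2) by (meson converse_rtrancl_into_rtrancl par_edges_iff)
      then show ?thesis using r(1) by blast
    qed
  qed
qed

lemma cut_DD: "c \<in> children par n \<Longrightarrow> DD par c = DD (cut n par) c"
proof -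
  assume c: "c \<in> children par n"
  then have pc: "par c = Some n" unfolding children_def by simp
  show ?thesis
  proof (rule DD_agree(1)[where r=c and S="Dset par c" and par'="cut n par" and par=par])
    show "c \<in> Dset par c" by (rule Dset_self)
    show "\<forall>v\<in>Dset par c - {c}. cut n par v = par v"
    proof
      fix v assume v: "v \<in> Dset par c - {c}"
      have "par v \<noteq> Some n"
      proof
        assume pv: "par v = Some n"
        obtain u where "par v = Some u" "(u,c) \<in> (par_edges par)\<^sup>*"
          using step_from[of v c par] v unfolding Dset_def by blast
        then have "(n, c) \<in> (par_edges par)\<^sup>*" using pv by simp
        then have "c = n" using root_reach[of par n, OF pn] by blast
        then show False using pc pn by simp
      qed
      then show "cut n par v = par v" unfolding cut_def by simp
    qed
    show "\<forall>v u. par v = Some u \<longrightarrow> u \<in> Dset par c \<longrightarrow> v < u \<longrightarrow> v \<in> Dset par c"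
      using Dset_back by blast
    show "\<forall>v u. cut n par v = Some u \<longrightarrow> u \<in> Dset par c \<longrightarrow> v < u \<longrightarrow> v \<in> Dset par c"
      unfolding cut_def using Dset_back by (metis option.distinct(1))
  qed
qed

lemma cut_MD: "card (MD par n) = 1 + (\<Sum>c\<in>children par n. card (MD (cut n par) c))"
proof -
  have chlt: "{c. par c = Some n \<and> c < n} = children par n"
    using ch_sub unfolding children_def by auto
  have split: "DD par n = insert n (\<Union>c\<in>children par n. DD par c)"
    using DD_split[of par n] chlt by simp
  have finCh: "finite (children par n)" using finV by (rule finite_subset[rotated]) (use ch_sub in blast)
  have DDsub: "DD par c \<subseteq> V" if "c \<in> children par n" for c
    using DD_in[OF F] ch_sub[OF that] by blast
  have finDD: "\<forall>c\<in>children par n. finite (DD par c)" using DDsub finV finite_subset by blast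
  have disj: "\<forall>c1\<in>children par n. \<forall>c2\<in>children par n. c1 \<noteq> c2 \<longrightarrow> DD par c1 \<inter> DD par c2 = {}"
  proof (intro ballI impI)
    fix c1 c2 assume c: "c1 \<in> children par n" "c2 \<in> children par n" "c1 \<noteq> c2"
    show "DD par c1 \<inter> DD par c2 = {}"
    proof (rule ccontr)
      assume "DD par c1 \<inter> DD par c2 \<noteq> {}"
      then obtain v where "(v,c1) \<in> (dec par)\<^sup>*" "(v,c2) \<in> (dec par)\<^sup>*" unfolding DD_def by auto
      then have "(v,c1) \<in> (par_edges par)\<^sup>*" "(v,c2) \<in> (par_edges par)\<^sup>*" using dec_sub by blast+
      then have "(c1,c2) \<in> (par_edges par)\<^sup>* \<or> (c2,c1) \<in> (par_edges par)\<^sup>*" by (rule reach_linear)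
      moreover have "(a, b) \<in> (par_edges par)\<^sup>* \<Longrightarrow> a \<in> children par n \<Longrightarrow> b \<in> children par n \<Longrightarrow> a \<noteq> b \<Longrightarrow> False" for a b
      proof -
        assume ab: "(a, b) \<in> (par_edges par)\<^sup>*" "a \<in> children par n" "b \<in> children par n" "a \<noteq> b"
        obtain u where "par a = Some u" "(u,b) \<in> (par_edges par)\<^sup>*" using step_from[OF ab(1,4)] by blast
        moreover have "par a = Some n" using ab(2) unfolding children_def by simp
        ultimately have "(n, b) \<in> (par_edges par)\<^sup>*" by simp
        then have "b = n" using root_reach[of par n, OF pn] by blast
        then show False using ab(3) ch_sub by blast
      qed
      ultimately show False using c by blast
    qed
  qed
  have nnot: "n \<notin> (\<Union>c\<in>children par n. DD par c)"
  proof
    assume "n \<in> (\<Union>c\<in>children par n. DD par c)"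
    then obtain c where "c \<in> children par n" "(n,c) \<in> (dec par)\<^sup>*" unfolding DD_def by auto
    then have "c = n" using root_reach[of par n, OF pn] dec_sub by blast
    then show False using \<open>c \<in> children par n\<close> ch_sub by blast
  qed
  have finU: "finite (\<Union>c\<in>children par n. DD par c)" using finCh finDD by blast
  have "card (DD par n) = 1 + card (\<Union>c\<in>children par n. DD par c)"
    using split nnot finU by simp
  also have "card (\<Union>c\<in>children par n. DD par c) = (\<Sum>c\<in>children par n. card (DD par c))"
    by (rule card_UN_disjoint[OF finCh finDD disj])
  also have "\<dots> = (\<Sum>c\<in>children par n. card (MD (cut n par) c))"
  proof (rule sum.cong[OF refl])
    fix c assume c: "c \<in> children par n"
    have "c \<in> rootsV (V - {n}) (cut n par)" using cut_roots c by simp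
    then have "cut n par c = None" unfolding rootsV_def by simp
    then show "card (DD par c) = card (MD (cut n par) c)" using MD_eq cut_DD[OF c] by simp
  qed
  finally show ?thesis using MD_eq[of par n, OF pn] by simp
qed

end

lemma attach_cut:
  assumes F: "forestV V par" and R: "rootsV V par = {n}" and finV: "finite V" and nmax: "\<forall>v\<in>V. v \<le> n"
  shows "attach (V - {n}) n (cut n par) = par"
proof
  fix v
  show "attach (V - {n}) n (cut n par) v = par v"
    using cut_roots[OF F R finV nmax] unfolding attach_def cut_def children_def by auto
qed

context
  fixes V n G
  assumes G: "forestV (V - {n}) G" and nV: "n \<in> V"
begin

lemma att_simps: "v \<in> rootsV (V - {n}) G \<Longrightarrow> attach (V - {n}) n G v = Some n"
  "v \<notin> rootsV (V - {n}) G \<Longrightarrow> attach (V - {n}) n G v = G v"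
  unfolding attach_def by auto

lemma Gn: "G v \<noteq> Some n" using forest_closed(2)[OF G, of v n] by auto

lemma cut_att: "cut n (attach (V - {n}) n G) = G"
proof
  fix v show "cut n (attach (V - {n}) n G) v = G v"
    using Gn[of v] unfolding cut_def attach_def rootsV_def by auto
qed

lemma att_children: "children (attach (V - {n}) n G) n = rootsV (V - {n}) G"
  using Gn unfolding children_def attach_def by auto

lemma att_path: "(v, r) \<in> (par_edges G)\<^sup>* \<Longrightarrow> (v, r) \<in> (par_edges (attach (V - {n}) n G))\<^sup>*"
proof (induction rule: converse_rtrancl_induct)
  case base then show ?case by simp
next
  case (step v w)
  then have "v \<notin> rootsV (V - {n}) G" unfolding rootsV_def by auto
  then have "attach (V - {n}) n G v = Some w" using att_simps(2) step(1) by simp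
  then show ?case using step(3) by (meson converse_rtrancl_into_rtrancl par_edges_iff)
qed

lemma att_roots: "rootsV V (attach (V - {n}) n G) = {n}"
proof
  show "rootsV V (attach (V - {n}) n G) \<subseteq> {n}"
  proof
    fix r assume r: "r \<in> rootsV V (attach (V - {n}) n G)"
    then have rV: "r \<in> V" and a: "attach (V - {n}) n G r = None" unfolding rootsV_def by auto
    then have "r \<notin> rootsV (V - {n}) G" using att_simps(1) by force
    moreover have "G r = None" using a att_simps(2) calculation by simp
    ultimately show "r \<in> {n}" using rV unfolding rootsV_def by auto
  qed
  have "n \<notin> rootsV (V - {n}) G" unfolding rootsV_def by simp
  then show "{n} \<subseteq> rootsV V (attach (V - {n}) n G)"
    using att_simps(2) forest_outside[OF G, of n] nV unfolding rootsV_def by simp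
qed

lemma att_forest: "forestV V (attach (V - {n}) n G)"
  unfolding forestV_def
proof (intro conjI ballI allI impI)
  fix v assume v: "v \<notin> V"
  then have "v \<notin> rootsV (V - {n}) G" unfolding rootsV_def by simp
  then show "attach (V - {n}) n G v = None" using att_simps(2) forest_outside[OF G, of v] v by simp
next
  fix v u assume "v \<in> V" "attach (V - {n}) n G v = Some u"
  then show "u \<in> V" using forest_closed(2)[OF G, of v u] nV unfolding attach_def by (auto split: if_splits)
next
  fix v assume v: "v \<in> V"
  show "\<exists>r\<in>rootsV V (attach (V - {n}) n G). (v, r) \<in> (par_edges (attach (V - {n}) n G))\<^sup>*"
  proof (cases "v = n")
    case True then show ?thesis using att_roots by auto
  next
    case False
    then obtain r where r: "r \<in> rootsV (V - {n}) G" "(v,r) \<in> (par_edges G)\<^sup>*"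
      using forest_reach_root[OF G] v by blast
    have "(v, r) \<in> (par_edges (attach (V - {n}) n G))\<^sup>*" by (rule att_path[OF r(2)])
    moreover have "(r, n) \<in> par_edges (attach (V - {n}) n G)" using att_simps(1)[OF r(1)] by simp
    ultimately have "(v, n) \<in> (par_edges (attach (V - {n}) n G))\<^sup>*" by (rule rtrancl.rtrancl_into_rtrancl)
    then show ?thesis using att_roots by auto
  qed
qed

end

lemma aset_root:
  assumes finV: "finite V" and nV: "n \<in> V" and nmax: "\<forall>v\<in>V. v \<le> n"
  shows "card {par \<in> aset l k V. par n = None} = card (fset l k (V - {n}))"
proof -
  let ?A = "{par \<in> aset l k V. par n = None}"
  have rootA: "rootsV V par = {n}" if "par \<in> ?A" for par
  proof -
    have c: "card (rootsV V par) = 1" and pn: "par n = None" using that unfolding aset_def by auto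
    have "n \<in> rootsV V par" using pn nV unfolding rootsV_def by simp
    then show ?thesis using c by (metis card_1_singletonE singletonD)
  qed
  have "bij_betw (cut n) ?A (fset l k (V - {n}))"
  proof (rule bij_betw_byWitness[where f' = "attach (V - {n}) n"])
    show "\<forall>a\<in>?A. attach (V - {n}) n (cut n a) = a"
      using attach_cut rootA finV nmax unfolding aset_def by blast
    show "\<forall>a'\<in>fset l k (V - {n}). cut n (attach (V - {n}) n a') = a'"
      using cut_att nV unfolding fset_def by blast
    show "cut n ` ?A \<subseteq> fset l k (V - {n})"
    proof
      fix y assume "y \<in> cut n ` ?A"
      then obtain par where p: "par \<in> ?A" "y = cut n par" by blast
      have F: "forestV V par" using p unfolding aset_def by blast
      have R: "rootsV V par = {n}" using rootA p(1) by blast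
      have st: "card {c \<in> children par n. c < n} = l" "card (MD par n) = k + 1"
        using p(1) R unfolding aset_def by auto
      have "{c \<in> children par n. c < n} = children par n" using ch_sub[OF F R finV nmax] by blast
      then have c1: "card (rootsV (V - {n}) (cut n par)) = l" using cut_roots[OF F R finV nmax] st by simp
      have "(\<Sum>r\<in>rootsV (V - {n}) (cut n par). card (MD (cut n par) r)) = k"
        using cut_MD[OF F R finV nmax] cut_roots[OF F R finV nmax] st by simp
      then show "y \<in> fset l k (V - {n})" unfolding fset_def using cut_forest[OF F R finV nmax] c1 p by simp
    qed
    show "attach (V - {n}) n ` fset l k (V - {n}) \<subseteq> ?A"
    proof
      fix y assume "y \<in> attach (V - {n}) n ` fset l k (V - {n})"
      then obtain G where g: "G \<in> fset l k (V - {n})" "y = attach (V - {n}) n G" by blast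
      have FG: "forestV (V - {n}) G" using g unfolding fset_def by blast
      let ?P = "attach (V - {n}) n G"
      have F: "forestV V ?P" by (rule att_forest[OF FG nV])
      have R: "rootsV V ?P = {n}" by (rule att_roots[OF FG nV])
      have ch: "children ?P n = rootsV (V - {n}) G" by (rule att_children[OF FG nV])
      have "{c \<in> children ?P n. c < n} = children ?P n" using ch_sub[OF F R finV nmax] by blast
      then have s1: "card {c \<in> children ?P n. c < n} = l" using ch g unfolding fset_def by simp
      have s2: "card (MD ?P n) = k + 1"
        using cut_MD[OF F R finV nmax] ch cut_att[OF FG nV] g unfolding fset_def by simp
      have pn: "?P n = None" using R unfolding rootsV_def by auto
      show "y \<in> ?A" unfolding aset_def using F R s1 s2 pn g by simp
    qed
  qed
  then show ?thesis by (rule bij_betw_same_card)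
qed

definition resZ :: "nat set \<Rightarrow> (nat \<Rightarrow> nat option) \<Rightarrow> (nat \<Rightarrow> nat option)" where
  "resZ Z par = (\<lambda>v. if v \<in> Z then par v else None)"

definition tJ :: "nat set \<Rightarrow> nat \<Rightarrow> (nat \<Rightarrow> nat option) \<Rightarrow> (nat \<Rightarrow> nat option)" where
  "tJ J n par = (\<lambda>v. if v \<in> J \<and> v \<noteq> n then par v else None)"

definition glueA :: "nat set \<Rightarrow> nat \<Rightarrow> (nat \<Rightarrow> nat option) \<Rightarrow> nat \<Rightarrow> (nat \<Rightarrow> nat option) \<Rightarrow> (nat \<Rightarrow> nat option)" where
  "glueA Z n R p T = (\<lambda>v. if v \<in> Z then R v else if v = n then Some p else T v)"

definition pieceA :: "nat \<Rightarrow> nat \<Rightarrow> nat set \<Rightarrow> nat \<Rightarrow> nat set \<Rightarrow> (nat \<Rightarrow> nat option) set" where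
  "pieceA l k V n Z = {par \<in> aset l k V. par n \<noteq> None \<and> Dset par n = V - Z}"

context
  fixes l k V n par p Z r
  assumes P: "par \<in> aset l k V" and pnp: "par n = Some p" and DZ: "Dset par n = V - Z"
    and ZV: "Z \<subseteq> V" and nV: "n \<in> V" and nmax: "\<forall>v\<in>V. v \<le> n" and rr: "rootsV V par = {r}"
begin

lemma aF: "forestV V par" using P unfolding aset_def by blast

lemma rV: "r \<in> V" "par r = None" using rr unfolding rootsV_def by auto

lemma rZ: "r \<in> Z"
proof -
  have "r \<notin> Dset par n"
  proof
    assume "r \<in> Dset par n"
    then have "(r, n) \<in> (par_edges par)\<^sup>*" unfolding Dset_def by simp
    then have "n = r" using root_reach[of par r, OF rV(2)] by blast
    then show False using pnp rV(2) by simp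
  qed
  then show ?thesis using DZ rV(1) by blast
qed

lemma Z_closed: "v \<in> Z \<Longrightarrow> par v = Some u \<Longrightarrow> u \<in> Z"
proof -
  assume a: "v \<in> Z" "par v = Some u"
  have "u \<in> V" using forest_closed(2)[OF aF a(2)] .
  moreover have "u \<notin> Dset par n" using Dset_back[of par v u n] a DZ by blast
  ultimately show "u \<in> Z" using DZ by blast
qed

lemma path_Z: "(v, y) \<in> (par_edges par)\<^sup>* \<Longrightarrow> v \<in> Z \<Longrightarrow> (v, y) \<in> (par_edges (resZ Z par))\<^sup>* \<and> y \<in> Z"
proof (induction rule: converse_rtrancl_induct)
  case base then show ?case by simp
next
  case (step v w)
  have pv: "par v = Some w" using step(1) by simp
  then have wZ: "w \<in> Z" using Z_closed step(4) by blast
  have "resZ Z par v = Some w" using pv step(4) unfolding resZ_def by simp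
  then show ?case using step(3)[OF wZ] by (meson converse_rtrancl_into_rtrancl par_edges_iff)
qed

lemma res_roots: "rootsV Z (resZ Z par) = {r}"
proof
  show "rootsV Z (resZ Z par) \<subseteq> {r}"
    using rr ZV unfolding rootsV_def resZ_def by auto
  show "{r} \<subseteq> rootsV Z (resZ Z par)" using rZ rV unfolding rootsV_def resZ_def by auto
qed

lemma res_forest: "forestV Z (resZ Z par)"
  unfolding forestV_def
proof (intro conjI ballI allI impI)
  fix v assume "v \<notin> Z" then show "resZ Z par v = None" unfolding resZ_def by simp
next
  fix v u assume "v \<in> Z" "resZ Z par v = Some u"
  then show "u \<in> Z" using Z_closed unfolding resZ_def by simp
next
  fix v assume v: "v \<in> Z"
  then obtain r' where "r' \<in> rootsV V par" "(v, r') \<in> (par_edges par)\<^sup>*" using forest_reach_root[OF aF] ZV by blast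
  then have "(v, r) \<in> (par_edges par)\<^sup>*" using rr by simp
  then show "\<exists>r\<in>rootsV Z (resZ Z par). (v, r) \<in> (par_edges (resZ Z par))\<^sup>*"
    using path_Z v res_roots by blast
qed

lemma res_children: "{c \<in> children (resZ Z par) r. c < r} = {c \<in> children par r. c < r}"
proof
  show "{c \<in> children (resZ Z par) r. c < r} \<subseteq> {c \<in> children par r. c < r}"
    unfolding children_def resZ_def by (auto split: if_splits)
  show "{c \<in> children par r. c < r} \<subseteq> {c \<in> children (resZ Z par) r. c < r}"
  proof
    fix c assume c: "c \<in> {c \<in> children par r. c < r}"
    then have pc: "par c = Some r" "c < r" unfolding children_def by auto
    have cV: "c \<in> V" using forest_closed(1)[OF aF pc(1)] .
    have "c \<notin> Dset par n"
    proof
      assume cD: "c \<in> Dset par n"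
      have "c \<noteq> n" using pc(2) nmax rV(1) by force
      then have "r \<in> Dset par n" using Dset_step[OF cD _ pc(1)] by blast
      then show False using rZ DZ by blast
    qed
    then have "c \<in> Z" using cV DZ by blast
    then show "c \<in> {c \<in> children (resZ Z par) r. c < r}" using pc unfolding children_def resZ_def by simp
  qed
qed

lemma res_MD: "MD (resZ Z par) r = MD par r"
proof -
  have n2: "resZ Z par r = None" using res_roots unfolding rootsV_def by auto
  have "DD par r = DD (resZ Z par) r"
  proof (rule DD_agree(1)[where r=r and S=Z and par'="resZ Z par" and par=par])
    show "r \<in> Z" by (rule rZ)
    show "\<forall>v\<in>Z - {r}. resZ Z par v = par v" unfolding resZ_def by simp
    show "\<forall>v u. par v = Some u \<longrightarrow> u \<in> Z \<longrightarrow> v < u \<longrightarrow> v \<in> Z"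
    proof (intro allI impI)
      fix v u assume a: "par v = Some u" "u \<in> Z" "v < u"
      show "v \<in> Z"
      proof (rule ccontr)
        assume vZ: "v \<notin> Z"
        have "v \<in> V" using forest_closed(1)[OF aF a(1)] .
        then have vD: "v \<in> Dset par n" using vZ DZ by blast
        show False
        proof (cases "v = n")
          case True
          have "u \<in> V" using a(2) ZV by blast
          then show False using True a(3) nmax by force
        next
          case False
          then have "u \<in> Dset par n" using Dset_step[OF vD False a(1)] by blast
          then show False using a(2) DZ by blast
        qed
      qed
    qed
    show "\<forall>v u. resZ Z par v = Some u \<longrightarrow> u \<in> Z \<longrightarrow> v < u \<longrightarrow> v \<in> Z"
      unfolding resZ_def by (simp split: if_splits)
  qed
  then show ?thesis using MD_eq[of par r, OF rV(2)] MD_eq[of "resZ Z par" r, OF n2] by simp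
qed

lemma res_aset: "resZ Z par \<in> aset l k Z"
proof -
  have "card {c \<in> children par r. c < r} = l \<and> card (MD par r) = k + 1" using P rr unfolding aset_def by auto
  then show ?thesis unfolding aset_def using res_forest res_roots res_children res_MD by simp
qed

lemma pZ: "p \<in> Z"
proof -
  have pV: "p \<in> V" using forest_closed(2)[OF aF pnp] .
  have "p \<notin> Dset par n"
  proof
    assume "p \<in> Dset par n"
    then have "(p, n) \<in> (par_edges par)\<^sup>*" unfolding Dset_def by simp
    moreover have "(n, p) \<in> (par_edges par)\<^sup>*" using pnp by auto
    ultimately have "n = p" using forest_antisym[OF aF] by blast
    then have "(n,n) \<in> (par_edges par)\<^sup>+" using pnp by auto
    then show False using forest_no_cycle[OF aF] by blast
  qed
  then show ?thesis using pV DZ by blast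
qed

lemma tJ_rtree: "tJ (V - Z) n par \<in> rtreeAt (V - Z) n"
proof -
  let ?J = "V - Z" and ?t = "tJ (V - Z) n par"
  have t: "\<And>v. ?t v = (if v \<in> ?J \<and> v \<noteq> n then par v else None)" unfolding tJ_def by simp
  have cl: "u \<in> ?J" if "v \<in> ?J" "v \<noteq> n" "par v = Some u" for v u
    using Dset_step[of v par n u] that DZ by blast
  have nn: "par v \<noteq> None" if "v \<in> ?J" "v \<noteq> n" for v
  proof -
    have "(v,n) \<in> (par_edges par)\<^sup>*" using that DZ unfolding Dset_def by blast
    then show ?thesis using step_from[of v n par] that by force
  qed
  have nJ: "n \<in> ?J" using DZ Dset_self by blast
  have R: "rootsV ?J ?t = {n}"
  proof
    show "rootsV ?J ?t \<subseteq> {n}"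
    proof
      fix v assume "v \<in> rootsV ?J ?t"
      then have "v \<in> ?J" "?t v = None" unfolding rootsV_def by auto
      then show "v \<in> {n}" using t[of v] nn[of v] by (cases "v = n") auto
    qed
    show "{n} \<subseteq> rootsV ?J ?t" using nJ t[of n] unfolding rootsV_def by simp
  qed
  have reach: "(v,n) \<in> (par_edges ?t)\<^sup>*" if vJ: "v \<in> ?J" for v
  proof -
    have "(v,n) \<in> (par_edges par)\<^sup>*" using vJ DZ unfolding Dset_def by blast
    then show ?thesis using vJ
    proof (induction rule: converse_rtrancl_induct)
      case base then show ?case by simp
    next
      case (step v w)
      show ?case
      proof (cases "v = n")
        case True then show ?thesis by simp
      next
        case False
        have pv: "par v = Some w" using step(1) by simp
        then have wJ: "w \<in> ?J" using cl[of v w] step(4) False by blast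
        have "?t v = Some w" using t[of v] step(4) False pv by simp
        then have "(v,w) \<in> par_edges ?t" by simp
        moreover have "(w,n) \<in> (par_edges ?t)\<^sup>*" using step(3) wJ by blast
        ultimately show ?thesis by (rule converse_rtrancl_into_rtrancl)
      qed
    qed
  qed
  have "forestV ?J ?t"
    unfolding forestV_def
  proof (intro conjI ballI allI impI)
    fix v assume "v \<notin> ?J" then show "?t v = None" using t[of v] by auto
  next
    fix v u assume a: "v \<in> ?J" "?t v = Some u"
    then have "v \<noteq> n" "par v = Some u" using t[of v] by (auto split: if_splits)
    then show "u \<in> ?J" using cl a(1) by blast
  next
    fix v assume "v \<in> ?J" then show "\<exists>r\<in>rootsV ?J ?t. (v, r) \<in> (par_edges ?t)\<^sup>*"
      using reach R by blast
  qed
  then show ?thesis unfolding rtreeAt_def using R by blast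
qed

end


context
  fixes l k V n Z R p T r
  assumes nV: "n \<in> V" and nmax: "\<forall>v\<in>V. v \<le> n" and ZV: "Z \<subseteq> V - {n}"
    and RA: "R \<in> aset l k Z" and pZ: "p \<in> Z" and TT: "T \<in> rtreeAt (V - Z) n"
    and rr: "rootsV Z R = {r}"
begin

lemma gRF: "forestV Z R" using RA unfolding aset_def by blast
lemma gTF: "forestV (V - Z) T" "rootsV (V - Z) T = {n}" using TT unfolding rtreeAt_def by auto
lemma Tn: "T n = None" using gTF(2) unfolding rootsV_def by auto
lemma rZ': "r \<in> Z" "R r = None" using rr unfolding rootsV_def by auto
lemma nZ: "n \<notin> Z" using ZV by blast

lemma P_simps: "v \<in> Z \<Longrightarrow> glueA Z n R p T v = R v" "glueA Z n R p T n = Some p"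
  "v \<notin> Z \<Longrightarrow> v \<noteq> n \<Longrightarrow> glueA Z n R p T v = T v"
  unfolding glueA_def using nZ by auto

lemma pathR: "(v, y) \<in> (par_edges R)\<^sup>* \<Longrightarrow> v \<in> Z \<Longrightarrow> (v, y) \<in> (par_edges (glueA Z n R p T))\<^sup>*"
proof (induction rule: converse_rtrancl_induct)
  case base then show ?case by simp
next
  case (step v w)
  have Rv: "R v = Some w" using step(1) by simp
  then have wZ: "w \<in> Z" using forest_closed(2)[OF gRF] by blast
  have "glueA Z n R p T v = Some w" using P_simps(1)[OF step(4)] Rv by simp
  then show ?case using step(3)[OF wZ] by (meson converse_rtrancl_into_rtrancl par_edges_iff)
qed

lemma pathT: "(v, y) \<in> (par_edges T)\<^sup>* \<Longrightarrow> (v, y) \<in> (par_edges (glueA Z n R p T))\<^sup>*"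
proof (induction rule: converse_rtrancl_induct)
  case base then show ?case by simp
next
  case (step v w)
  have Tv: "T v = Some w" using step(1) by simp
  then have "v \<in> V - Z" using forest_closed(1)[OF gTF(1)] by blast
  moreover have "v \<noteq> n" using Tv Tn by auto
  ultimately have "glueA Z n R p T v = Some w" using P_simps(3) Tv by simp
  then show ?case using step(3) by (meson converse_rtrancl_into_rtrancl par_edges_iff)
qed

lemma stayZ: "(v, y) \<in> (par_edges (glueA Z n R p T))\<^sup>* \<Longrightarrow> v \<in> Z \<Longrightarrow> y \<in> Z"
proof (induction rule: rtrancl_induct)
  case base then show ?case by simp
next
  case (step y z)
  then have "R y = Some z" using P_simps(1) by simp
  then show ?case using forest_closed(2)[OF gRF] by blast
qed

lemma P_roots: "rootsV V (glueA Z n R p T) = {r}"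
proof
  show "rootsV V (glueA Z n R p T) \<subseteq> {r}"
  proof
    fix v assume v: "v \<in> rootsV V (glueA Z n R p T)"
    then have vV: "v \<in> V" and g: "glueA Z n R p T v = None" unfolding rootsV_def by auto
    show "v \<in> {r}"
    proof (cases "v \<in> Z")
      case True
      then have "v \<in> rootsV Z R" using g P_simps(1) unfolding rootsV_def by simp
      then show ?thesis using rr by simp
    next
      case False
      then have vn: "v \<noteq> n" using g P_simps(2) by auto
      then have "v \<in> rootsV (V - Z) T" using g P_simps(3)[OF False] vV False unfolding rootsV_def by simp
      then show ?thesis using gTF(2) vn by simp
    qed
  qed
  show "{r} \<subseteq> rootsV V (glueA Z n R p T)" using rZ' P_simps(1) ZV unfolding rootsV_def by auto
qed

lemma P_forest: "forestV V (glueA Z n R p T)"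
  unfolding forestV_def
proof (intro conjI ballI allI impI)
  fix v assume v: "v \<notin> V"
  then have "v \<notin> Z" "v \<noteq> n" using ZV nV by auto
  then show "glueA Z n R p T v = None" using P_simps(3) forest_outside[OF gTF(1), of v] v by simp
next
  fix v u assume v: "v \<in> V" "glueA Z n R p T v = Some u"
  show "u \<in> V"
  proof (cases "v \<in> Z")
    case True then show ?thesis using v P_simps(1) forest_closed(2)[OF gRF, of v u] ZV by auto
  next
    case False
    show ?thesis
    proof (cases "v = n")
      case True then show ?thesis using v P_simps(2) pZ ZV by auto
    next
      case False then show ?thesis using v P_simps(3) \<open>v \<notin> Z\<close> forest_closed(2)[OF gTF(1), of v u] by auto
    qed
  qed
next
  have genZ: "(v, r) \<in> (par_edges (glueA Z n R p T))\<^sup>*" if vZ: "v \<in> Z" for v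
  proof -
    obtain r' where "r' \<in> rootsV Z R" "(v, r') \<in> (par_edges R)\<^sup>*" using forest_reach_root[OF gRF vZ] by blast
    then have "(v, r) \<in> (par_edges R)\<^sup>*" using rr by simp
    then show ?thesis using pathR vZ by blast
  qed
  fix v assume v: "v \<in> V"
  show "\<exists>r\<in>rootsV V (glueA Z n R p T). (v, r) \<in> (par_edges (glueA Z n R p T))\<^sup>*"
  proof (cases "v \<in> Z")
    case True then show ?thesis using genZ P_roots by blast
  next
    case False
    then obtain r' where "r' \<in> rootsV (V - Z) T" "(v, r') \<in> (par_edges T)\<^sup>*" using forest_reach_root[OF gTF(1)] v by blast
    then have "(v, n) \<in> (par_edges T)\<^sup>*" using gTF(2) by simp
    then have "(v, n) \<in> (par_edges (glueA Z n R p T))\<^sup>*" by (rule pathT)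
    moreover have "(n, p) \<in> par_edges (glueA Z n R p T)" using P_simps(2) by simp
    ultimately have "(v, p) \<in> (par_edges (glueA Z n R p T))\<^sup>*" by (rule rtrancl.rtrancl_into_rtrancl)
    then have "(v, r) \<in> (par_edges (glueA Z n R p T))\<^sup>*" using genZ[OF pZ] by (rule rtrancl_trans)
    then show ?thesis using P_roots by blast
  qed
qed

lemma P_D: "Dset (glueA Z n R p T) n = V - Z"
proof
  show "V - Z \<subseteq> Dset (glueA Z n R p T) n"
  proof
    fix v assume v: "v \<in> V - Z"
    then obtain r' where "r' \<in> rootsV (V - Z) T" "(v, r') \<in> (par_edges T)\<^sup>*" using forest_reach_root[OF gTF(1)] by blast
    then have "(v, n) \<in> (par_edges T)\<^sup>*" using gTF(2) by simp
    then show "v \<in> Dset (glueA Z n R p T) n" using pathT unfolding Dset_def by blast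
  qed
  show "Dset (glueA Z n R p T) n \<subseteq> V - Z"
  proof
    fix v assume v: "v \<in> Dset (glueA Z n R p T) n"
    then have vn: "(v, n) \<in> (par_edges (glueA Z n R p T))\<^sup>*" unfolding Dset_def by simp
    have "v \<notin> Z" using stayZ[OF vn] nZ by blast
    moreover have "v \<in> V"
    proof (rule ccontr)
      assume "v \<notin> V"
      then have "glueA Z n R p T v = None" using P_forest forest_outside by blast
      then have "v = n" using vn by (metis converse_rtranclE option.distinct(1) par_edges_iff)
      then show False using \<open>v \<notin> V\<close> nV by simp
    qed
    ultimately show "v \<in> V - Z" by blast
  qed
qed

lemma P_children: "{c \<in> children (glueA Z n R p T) r. c < r} = {c \<in> children R r. c < r}"
proof
  show "{c \<in> children R r. c < r} \<subseteq> {c \<in> children (glueA Z n R p T) r. c < r}"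
  proof
    fix c assume "c \<in> {c \<in> children R r. c < r}"
    then have c: "R c = Some r" "c < r" unfolding children_def by auto
    then have "c \<in> Z" using forest_closed(1)[OF gRF] by blast
    then show "c \<in> {c \<in> children (glueA Z n R p T) r. c < r}"
      using c P_simps(1) unfolding children_def by simp
  qed
  show "{c \<in> children (glueA Z n R p T) r. c < r} \<subseteq> {c \<in> children R r. c < r}"
  proof
    fix c assume "c \<in> {c \<in> children (glueA Z n R p T) r. c < r}"
    then have c: "glueA Z n R p T c = Some r" "c < r" unfolding children_def by auto
    show "c \<in> {c \<in> children R r. c < r}"
    proof (cases "c \<in> Z")
      case True then show ?thesis using c P_simps(1) unfolding children_def by simp
    next
      case False
      show ?thesis
      proof (cases "c = n")
        case True
        have "r \<in> V" using rZ' ZV by blast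
        then show ?thesis using True c(2) nmax by force
      next
        case False
        then have "T c = Some r" using c P_simps(3) \<open>c \<notin> Z\<close> by simp
        then have "r \<in> V - Z" using forest_closed(2)[OF gTF(1)] by blast
        then show ?thesis using rZ' by blast
      qed
    qed
  qed
qed

lemma P_MD: "MD (glueA Z n R p T) r = MD R r"
proof -
  have n2: "glueA Z n R p T r = None" using P_simps(1) rZ' by simp
  have "DD R r = DD (glueA Z n R p T) r"
  proof (rule DD_agree(1)[where r=r and S=Z and par'="glueA Z n R p T" and par=R])
    show "r \<in> Z" by (rule rZ'(1))
    show "\<forall>v\<in>Z - {r}. glueA Z n R p T v = R v" using P_simps(1) by simp
    show "\<forall>v u. R v = Some u \<longrightarrow> u \<in> Z \<longrightarrow> v < u \<longrightarrow> v \<in> Z"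
      using forest_closed(1)[OF gRF] by blast
    show "\<forall>v u. glueA Z n R p T v = Some u \<longrightarrow> u \<in> Z \<longrightarrow> v < u \<longrightarrow> v \<in> Z"
    proof (intro allI impI)
      fix v u assume a: "glueA Z n R p T v = Some u" "u \<in> Z" "v < u"
      show "v \<in> Z"
      proof (rule ccontr)
        assume vZ: "v \<notin> Z"
        show False
        proof (cases "v = n")
          case True
          have "u \<in> V" using a(2) ZV by blast
          then show False using True a(3) nmax by force
        next
          case False
          then have "T v = Some u" using a(1) P_simps(3) vZ by simp
          then have "u \<in> V - Z" using forest_closed(2)[OF gTF(1)] by blast
          then show False using a(2) by blast
        qed
      qed
    qed
  qed
  then show ?thesis using MD_eq[of R r, OF rZ'(2)] MD_eq[of "glueA Z n R p T" r, OF n2] by simp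
qed

lemma P_aset: "glueA Z n R p T \<in> aset l k V"
proof -
  have "card {c \<in> children R r. c < r} = l \<and> card (MD R r) = k + 1" using RA rr unfolding aset_def by auto
  then show ?thesis unfolding aset_def using P_forest P_roots P_children P_MD by simp
qed

end

lemma pieceA_card:
  assumes finV: "finite V" and nV: "n \<in> V" and nmax: "\<forall>v\<in>V. v \<le> n" and ZV: "Z \<subseteq> V - {n}"
  shows "card (pieceA l k V n Z) = card (aset l k Z) * (card Z * card (rtreeAt (V - Z) n))"
proof -
  let ?f = "\<lambda>par. (resZ Z par, the (par n), tJ (V - Z) n par)"
  let ?g = "\<lambda>(R, p, T). glueA Z n R p T"
  have one: "\<exists>r. rootsV V par = {r}" if a: "par \<in> aset l k V" for par
  proof -
    have "card (rootsV V par) = 1" using a unfolding aset_def by blast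
    then show ?thesis using card_1_singletonE by blast
  qed
  have oneZ: "\<exists>r. rootsV Z R = {r}" if a: "R \<in> aset l k Z" for R
  proof -
    have "card (rootsV Z R) = 1" using a unfolding aset_def by blast
    then show ?thesis using card_1_singletonE by blast
  qed
  have "bij_betw ?f (pieceA l k V n Z) (aset l k Z \<times> (Z \<times> rtreeAt (V - Z) n))"
  proof (rule bij_betw_byWitness[where f' = ?g])
    show "\<forall>a\<in>pieceA l k V n Z. ?g (?f a) = a"
    proof
      fix par assume p: "par \<in> pieceA l k V n Z"
      then obtain q where pq: "par n = Some q" and P: "par \<in> aset l k V" and D: "Dset par n = V - Z"
        unfolding pieceA_def by auto
      have F: "forestV V par" using P unfolding aset_def by blast
      have "glueA Z n (resZ Z par) q (tJ (V - Z) n par) = par"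
      proof
        fix v
        show "glueA Z n (resZ Z par) q (tJ (V - Z) n par) v = par v"
        proof (cases "v \<in> Z")
          case True then show ?thesis unfolding glueA_def resZ_def by simp
        next
          case False
          show ?thesis
          proof (cases "v = n")
            case True then show ?thesis using pq \<open>v \<notin> Z\<close> unfolding glueA_def by simp
          next
            case False
            have "v \<notin> V \<Longrightarrow> par v = None" using forest_outside[OF F] by blast
            then show ?thesis using False \<open>v \<notin> Z\<close> unfolding glueA_def tJ_def by auto
          qed
        qed
      qed
      then show "?g (?f par) = par" using pq by simp
    qed
    show "\<forall>a'\<in>aset l k Z \<times> (Z \<times> rtreeAt (V - Z) n). ?f (?g a') = a'"
    proof
      fix a' assume a': "a' \<in> aset l k Z \<times> (Z \<times> rtreeAt (V - Z) n)"
      then obtain R p T where a: "a' = (R, p, T)" "R \<in> aset l k Z" "p \<in> Z" "T \<in> rtreeAt (V - Z) n" by blast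
      have gRF: "forestV Z R" using a unfolding aset_def by blast
      have gTF: "forestV (V - Z) T" "rootsV (V - Z) T = {n}" using a unfolding rtreeAt_def by auto
      have Tn: "T n = None" using gTF(2) unfolding rootsV_def by auto
      have nZ: "n \<notin> Z" using ZV by blast
      have "resZ Z (glueA Z n R p T) = R"
      proof
        fix v show "resZ Z (glueA Z n R p T) v = R v"
        proof (cases "v \<in> Z")
          case True then show ?thesis unfolding resZ_def glueA_def by simp
        next
          case False then show ?thesis using forest_outside[OF gRF, of v] unfolding resZ_def by simp
        qed
      qed
      moreover have "the (glueA Z n R p T n) = p" using nZ unfolding glueA_def by simp
      moreover have "tJ (V - Z) n (glueA Z n R p T) = T"
      proof
        fix v show "tJ (V - Z) n (glueA Z n R p T) v = T v"
        proof (cases "v \<in> V - Z \<and> v \<noteq> n")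
          case True then show ?thesis unfolding tJ_def glueA_def by simp
        next
          case False
          then have "T v = None" using forest_outside[OF gTF(1), of v] Tn by blast
          moreover have "tJ (V - Z) n (glueA Z n R p T) v = None" unfolding tJ_def by (rule if_not_P[OF False])
          ultimately show ?thesis by simp
        qed
      qed
      ultimately show "?f (?g a') = a'" using a by simp
    qed
    show "?f ` pieceA l k V n Z \<subseteq> aset l k Z \<times> (Z \<times> rtreeAt (V - Z) n)"
    proof
      fix y assume "y \<in> ?f ` pieceA l k V n Z"
      then obtain par where p: "par \<in> pieceA l k V n Z" "y = ?f par" by blast
      then obtain q where pq: "par n = Some q" and P: "par \<in> aset l k V" and D: "Dset par n = V - Z"
        unfolding pieceA_def by auto
      obtain r where rr: "rootsV V par = {r}" using one[OF P] by blast
      have "resZ Z par \<in> aset l k Z" using res_aset[OF P pq D _ nV nmax rr] ZV by blast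
      moreover have "q \<in> Z" using pZ[OF P pq D _ nV nmax rr] ZV by blast
      moreover have "tJ (V - Z) n par \<in> rtreeAt (V - Z) n" using tJ_rtree[OF P pq D _ nV nmax rr] ZV by blast
      ultimately show "y \<in> aset l k Z \<times> (Z \<times> rtreeAt (V - Z) n)" using p pq by simp
    qed
    show "?g ` (aset l k Z \<times> (Z \<times> rtreeAt (V - Z) n)) \<subseteq> pieceA l k V n Z"
    proof
      fix y assume "y \<in> ?g ` (aset l k Z \<times> (Z \<times> rtreeAt (V - Z) n))"
      then obtain a' where a': "a' \<in> aset l k Z \<times> (Z \<times> rtreeAt (V - Z) n)" "y = ?g a'" by blast
      obtain R p T where a'': "a' = (R, p, T)" by (cases a') blast
      have a: "y = glueA Z n R p T" "R \<in> aset l k Z" "p \<in> Z" "T \<in> rtreeAt (V - Z) n"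
        using a' a'' by auto
      obtain r where rr: "rootsV Z R = {r}" using oneZ[OF a(2)] by blast
      have "glueA Z n R p T \<in> aset l k V" by (rule P_aset[OF nV nmax ZV a(2-4) rr])
      moreover have "glueA Z n R p T n = Some p" by (rule P_simps(2)[OF nV nmax ZV a(2-4) rr])
      moreover have "Dset (glueA Z n R p T) n = V - Z" by (rule P_D[OF nV nmax ZV a(2-4) rr])
      ultimately show "y \<in> pieceA l k V n Z" unfolding pieceA_def a(1) by simp
    qed
  qed
  then show ?thesis by (simp add: bij_betw_same_card card_cartesian_product)
qed

lemma aset_rec:
  assumes finV: "finite V" and nV: "n \<in> V" and nmax: "\<forall>v\<in>V. v \<le> n"
  shows "card (aset l k V) = card (fset l k (V - {n})) +
     (\<Sum>Z\<in>{Z. Z \<subseteq> V - {n} \<and> Z \<noteq> {}}. card (aset l k Z) * (card Z * card (rtreeAt (V - Z) n)))"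
proof -
  let ?Z = "{Z. Z \<subseteq> V - {n} \<and> Z \<noteq> {}}"
  let ?A = "{par \<in> aset l k V. par n = None}"
  have split: "aset l k V = ?A \<union> (\<Union>Z\<in>?Z. pieceA l k V n Z)"
  proof
    show "aset l k V \<subseteq> ?A \<union> (\<Union>Z\<in>?Z. pieceA l k V n Z)"
    proof
      fix par assume p: "par \<in> aset l k V"
      show "par \<in> ?A \<union> (\<Union>Z\<in>?Z. pieceA l k V n Z)"
      proof (cases "par n")
        case None then show ?thesis using p by blast
      next
        case (Some q)
        have F: "forestV V par" using p unfolding aset_def by blast
        have "card (rootsV V par) = 1" using p unfolding aset_def by blast
        then obtain r where rr: "rootsV V par = {r}" using card_1_singletonE by blast
        have DV: "Dset par n \<subseteq> V" using Dset_V[OF F nV] .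
        then have D: "Dset par n = V - (V - Dset par n)" by blast
        have nD: "n \<in> Dset par n" by (rule Dset_self)
        have ZV: "V - Dset par n \<subseteq> V" by blast
        have "r \<in> V - Dset par n" by (rule rZ[OF p Some D ZV nV nmax rr])
        then have "V - Dset par n \<in> ?Z" using nD by blast
        moreover have "par \<in> pieceA l k V n (V - Dset par n)" using p Some D unfolding pieceA_def by simp
        ultimately show ?thesis by blast
      qed
    qed
    show "?A \<union> (\<Union>Z\<in>?Z. pieceA l k V n Z) \<subseteq> aset l k V" unfolding pieceA_def by blast
  qed
  have finB: "finite (aset l k V)" unfolding aset_def using finite_forests[OF finV] by simp
  have "?Z \<subseteq> Pow V" by blast
  then have finZ: "finite ?Z" using finV by (meson finite_Pow_iff finite_subset)
  have subP: "pieceA l k V n Z \<subseteq> aset l k V" for Z unfolding pieceA_def by blast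
  have finP: "\<forall>Z\<in>?Z. finite (pieceA l k V n Z)"
    using finB subP finite_subset by blast
  have disjP: "\<forall>I\<in>?Z. \<forall>J\<in>?Z. I \<noteq> J \<longrightarrow> pieceA l k V n I \<inter> pieceA l k V n J = {}"
  proof (intro ballI impI)
    fix I J assume a: "I \<in> ?Z" "J \<in> ?Z" "I \<noteq> J"
    show "pieceA l k V n I \<inter> pieceA l k V n J = {}"
    proof (rule ccontr)
      assume "pieceA l k V n I \<inter> pieceA l k V n J \<noteq> {}"
      then obtain par where "Dset par n = V - I" "Dset par n = V - J" unfolding pieceA_def by blast
      then have "V - I = V - J" by simp
      then show False using a by blast
    qed
  qed
  have "card (aset l k V) = card ?A + card (\<Union>Z\<in>?Z. pieceA l k V n Z)"
  proof -
    have f1: "finite ?A" using finB by (rule finite_subset[rotated]) blast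
    have f2: "finite (\<Union>Z\<in>?Z. pieceA l k V n Z)" using finB by (rule finite_subset[rotated]) (use subP in blast)
    have d: "?A \<inter> (\<Union>Z\<in>?Z. pieceA l k V n Z) = {}" unfolding pieceA_def by blast
    show ?thesis by (subst split) (rule card_Un_disjoint[OF f1 f2 d])
  qed
  also have "card (\<Union>Z\<in>?Z. pieceA l k V n Z) = (\<Sum>Z\<in>?Z. card (pieceA l k V n Z))"
    by (rule card_UN_disjoint[OF finZ]) (use finP disjP in auto)
  also have "\<dots> = (\<Sum>Z\<in>?Z. card (aset l k Z) * (card Z * card (rtreeAt (V - Z) n)))"
    by (rule sum.cong[OF refl]) (use pieceA_card[OF finV nV nmax] in auto)
  also have "card ?A = card (fset l k (V - {n}))" using aset_root[OF finV nV nmax] by simp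
  finally show ?thesis .
qed


lemma sum_subsets_card:
  fixes g :: "nat \<Rightarrow> nat"
  assumes fin: "finite A"
  shows "(\<Sum>Z\<in>{Z. Z \<subseteq> A \<and> Z \<noteq> {}}. g (card Z)) = (\<Sum>z\<in>{1..card A}. (card A choose z) * g z)"
proof -
  let ?S = "{Z. Z \<subseteq> A \<and> Z \<noteq> {}}"
  have "?S \<subseteq> Pow A" by blast
  then have finS: "finite ?S" using fin by (meson finite_Pow_iff finite_subset)
  have im: "card ` ?S \<subseteq> {1..card A}"
  proof
    fix y assume "y \<in> card ` ?S"
    then obtain Z where Z: "Z \<subseteq> A" "Z \<noteq> {}" "y = card Z" by blast
    have "finite Z" using Z(1) fin finite_subset by blast
    then have "1 \<le> y" using Z by (simp add: Suc_leI card_gt_0_iff)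
    moreover have "y \<le> card A" using Z fin by (simp add: card_mono)
    ultimately show "y \<in> {1..card A}" by simp
  qed
  have "(\<Sum>Z\<in>?S. g (card Z)) = (\<Sum>z\<in>{1..card A}. \<Sum>Z\<in>{Z. Z \<in> ?S \<and> card Z = z}. g (card Z))"
    by (rule sum.group[OF finS _ im, symmetric]) simp
  also have "\<dots> = (\<Sum>z\<in>{1..card A}. (card A choose z) * g z)"
  proof (rule sum.cong[OF refl])
    fix z assume z: "z \<in> {1..card A}"
    have "{Z. Z \<in> ?S \<and> card Z = z} = {Z. Z \<subseteq> A \<and> card Z = z}" using z by auto
    then have c: "card {Z. Z \<in> ?S \<and> card Z = z} = card A choose z" using n_subsets[OF fin] by simp
    have "(\<Sum>Z\<in>{Z. Z \<in> ?S \<and> card Z = z}. g (card Z)) = (\<Sum>Z\<in>{Z. Z \<in> ?S \<and> card Z = z}. g z)"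
      by (rule sum.cong) auto
    also have "\<dots> = card {Z. Z \<in> ?S \<and> card Z = z} * g z" by simp
    finally show "(\<Sum>Z\<in>{Z. Z \<in> ?S \<and> card Z = z}. g (card Z)) = (card A choose z) * g z" using c by simp
  qed
  finally show ?thesis .
qed

lemma rtrees_card:
  assumes fin: "finite I"
  shows "card (rtrees I) = card I * card (rtreeAt {1..card I} (card I))"
proof -
  have eq: "rtrees I = (\<Union>x\<in>I. rtreeAt I x)"
  proof
    show "rtrees I \<subseteq> (\<Union>x\<in>I. rtreeAt I x)"
    proof
      fix t assume "t \<in> rtrees I"
      then have F: "forestV I t" and c: "card (rootsV I t) = 1" unfolding rtrees_def by auto
      then obtain x where x: "rootsV I t = {x}" using card_1_singletonE by blast
      then have "x \<in> I" unfolding rootsV_def by auto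
      then show "t \<in> (\<Union>x\<in>I. rtreeAt I x)" using F x unfolding rtreeAt_def by blast
    qed
    show "(\<Union>x\<in>I. rtreeAt I x) \<subseteq> rtrees I" unfolding rtreeAt_def rtrees_def by auto
  qed
  have finR: "\<forall>x\<in>I. finite (rtreeAt I x)"
    unfolding rtreeAt_def using finite_forests[OF fin] by simp
  have disj: "\<forall>x\<in>I. \<forall>y\<in>I. x \<noteq> y \<longrightarrow> rtreeAt I x \<inter> rtreeAt I y = {}"
    unfolding rtreeAt_def by auto
  have "card (rtrees I) = (\<Sum>x\<in>I. card (rtreeAt I x))"
    unfolding eq by (rule card_UN_disjoint[OF fin finR disj])
  also have "\<dots> = (\<Sum>x\<in>I. card (rtreeAt {1..card I} (card I)))"
    by (rule sum.cong[OF refl]) (rule rtreeAt_inv[OF fin])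
  finally show ?thesis by simp
qed

lemma binom_swap:
  assumes "1 \<le> z" "z \<le> m"
  shows "(m choose z) * z = (m choose (m + 1 - z)) * (m + 1 - z)"
proof -
  have "(m choose z) * z = m * ((m - 1) choose (z - 1))"
    using times_binomial_minus1_eq[of z m] assms by (simp add: mult.commute)
  also have "(m - 1) choose (z - 1) = (m - 1) choose (m - z)"
    using binomial_symmetric[of "z - 1" "m - 1"] assms by simp
  also have "m * ((m - 1) choose (m - z)) = (m + 1 - z) * (m choose (m + 1 - z))"
    using times_binomial_minus1_eq[of "m + 1 - z" m] assms by simp
  finally show ?thesis by (simp add: mult.commute)
qed

lemma main_eq:
  assumes "1 \<le> n"
  shows "card (aset l k {1..n}) = card (bset l k {1..n} n)"
  using assms
proof (induction n rule: less_induct)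
  case (less n)
  let ?V = "{1..n} :: nat set"
  let ?Z = "{Z. Z \<subseteq> ?V - {n} \<and> Z \<noteq> {}}"
  let ?a = "\<lambda>m. card (aset l k {1..m})" and ?b = "\<lambda>m. card (bset l k {1..m} m)"
  let ?r = "\<lambda>m. card (rtreeAt {1..m} m)"
  have finV: "finite ?V" by simp
  have nV: "n \<in> ?V" using less.prems by simp
  have nmax: "\<forall>v\<in>?V. v \<le> n" by simp
  have cA: "card (?V - {n}) = n - 1" using nV by simp
  have finA: "finite (?V - {n})" by simp
  have A1: "(\<Sum>Z\<in>?Z. card (aset l k Z) * (card Z * card (rtreeAt (?V - Z) n)))
        = (\<Sum>Z\<in>?Z. (\<lambda>z. ?a z * (z * ?r (n - z))) (card Z))"
  proof (rule sum.cong[OF refl])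
    fix Z assume Z: "Z \<in> ?Z"
    then have ZV: "Z \<subseteq> ?V" and nZ: "n \<notin> Z" by auto
    have finZ: "finite Z" using ZV finite_subset by blast
    have "card (aset l k Z) = ?a (card Z)" by (rule aset_inv[OF finZ])
    moreover have "card (rtreeAt (?V - Z) n) = ?r (card (?V - Z))"
      by (rule rtreeAt_inv) (use nV nZ in auto)
    moreover have "card (?V - Z) = n - card Z" using ZV finZ by (simp add: card_Diff_subset)
    ultimately show "card (aset l k Z) * (card Z * card (rtreeAt (?V - Z) n)) = (\<lambda>z. ?a z * (z * ?r (n - z))) (card Z)"
      by simp
  qed
  have B1: "(\<Sum>I\<in>?Z. card (rtrees I) * card (bset l k (?V - I) n))
        = (\<Sum>I\<in>?Z. (\<lambda>i. (i * ?r i) * ?b (n - i)) (card I))"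
  proof (rule sum.cong[OF refl])
    fix I assume I: "I \<in> ?Z"
    then have IV: "I \<subseteq> ?V" and nI: "n \<notin> I" by auto
    have finI: "finite I" using IV finite_subset by blast
    have "card (rtrees I) = card I * ?r (card I)" by (rule rtrees_card[OF finI])
    moreover have "Max (?V - I) = n"
      by (rule Max_eqI) (use nV nI in auto)
    then have "card (bset l k (?V - I) n) = ?b (card (?V - I))"
    proof -
      have "?V - I \<noteq> {}" using nV nI by blast
      then show ?thesis using bset_inv[of "?V - I" l k] \<open>Max (?V - I) = n\<close> by simp
    qed
    moreover have "card (?V - I) = n - card I" using IV finI by (simp add: card_Diff_subset)
    ultimately show "card (rtrees I) * card (bset l k (?V - I) n) = (\<lambda>i. (i * ?r i) * ?b (n - i)) (card I)"
      by simp
  qed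
  have sA: "(\<Sum>Z\<in>?Z. (\<lambda>z. ?a z * (z * ?r (n - z))) (card Z))
      = (\<Sum>z\<in>{1..n-1}. ((n - 1) choose z) * (?a z * (z * ?r (n - z))))"
    using sum_subsets_card[OF finA, of "\<lambda>z. ?a z * (z * ?r (n - z))"] cA by simp
  have sB: "(\<Sum>I\<in>?Z. (\<lambda>i. (i * ?r i) * ?b (n - i)) (card I))
      = (\<Sum>i\<in>{1..n-1}. ((n - 1) choose i) * ((i * ?r i) * ?b (n - i)))"
    using sum_subsets_card[OF finA, of "\<lambda>i. (i * ?r i) * ?b (n - i)"] cA by simp
  have reidx: "(\<Sum>i\<in>{1..n-1}. ((n - 1) choose i) * ((i * ?r i) * ?b (n - i)))
      = (\<Sum>z\<in>{1..n-1}. ((n - 1) choose (n - z)) * (((n - z) * ?r (n - z)) * ?b (n - (n - z))))"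
    by (rule sum.reindex_bij_witness[where i = "\<lambda>z. n - z" and j = "\<lambda>i. n - i"]) auto
  have tm: "((n - 1) choose z) * (?a z * (z * ?r (n - z)))
      = ((n - 1) choose (n - z)) * (((n - z) * ?r (n - z)) * ?b (n - (n - z)))" if z: "z \<in> {1..n-1}" for z
  proof -
    have z1: "1 \<le> z" "z \<le> n - 1" using z by auto
    have IH: "?a z = ?b z" using less.IH[of z] z1 by simp
    have nz: "n - (n - z) = z" using z1 by simp
    have bs: "((n - 1) choose z) * z = ((n - 1) choose (n - z)) * (n - z)"
      using binom_swap[OF z1] z1 by simp
    have "((n - 1) choose z) * (?a z * (z * ?r (n - z))) = (((n - 1) choose z) * z) * ?r (n - z) * ?b z"
      using IH by (simp add: algebra_simps)
    also have "\<dots> = (((n - 1) choose (n - z)) * (n - z)) * ?r (n - z) * ?b z" using bs by simp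
    also have "\<dots> = ((n - 1) choose (n - z)) * (((n - z) * ?r (n - z)) * ?b (n - (n - z)))"
      using nz by (simp add: algebra_simps)
    finally show ?thesis .
  qed
  have "?a n = card (fset l k (?V - {n})) +
     (\<Sum>Z\<in>?Z. card (aset l k Z) * (card Z * card (rtreeAt (?V - Z) n)))"
    by (rule aset_rec[OF finV nV nmax])
  also have "\<dots> = card (fset l k (?V - {n})) + (\<Sum>z\<in>{1..n-1}. ((n - 1) choose z) * (?a z * (z * ?r (n - z))))"
    using A1 sA by simp
  also have "\<dots> = card (fset l k (?V - {n})) +
      (\<Sum>z\<in>{1..n-1}. ((n - 1) choose (n - z)) * (((n - z) * ?r (n - z)) * ?b (n - (n - z))))"
  proof -
    have "(\<Sum>z\<in>{1..n-1}. ((n - 1) choose z) * (?a z * (z * ?r (n - z))))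
      = (\<Sum>z\<in>{1..n-1}. ((n - 1) choose (n - z)) * (((n - z) * ?r (n - z)) * ?b (n - (n - z))))"
      by (rule sum.cong[OF refl tm])
    then show ?thesis by simp
  qed
  also have "\<dots> = card (fset l k (?V - {n})) + (\<Sum>I\<in>?Z. card (rtrees I) * card (bset l k (?V - I) n))"
    using B1 sB reidx by simp
  also have "\<dots> = ?b n" by (rule bset_rec[OF finV nV, symmetric])
  finally show ?case .
qed

theorem corollary4p2:
  fixes n l k :: nat
  assumes "n \<ge> 1"
  shows "A_count n l k = B_count n l k"
  using main_eq[OF assms] A_count_eq B_count_eq by simp


end
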